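(* Let $\mathcal{C}$ be a path category and let $\mathcal{D}$ be a class of display maps with weak (respectively strong) homotopy $\Pi$-types in $\mathcal{C}$. Let $\overline{\mathcal{D}}$ be the closure of $\mathcal{D}$ under composition. Then for all composable $d: X \to I$ in $\mathcal{D}$ and $f: I \to J$ in $\overline{\mathcal{D}}$, the weak (respectively strong) homotopy $\Pi$-type $\Pi_f(d)$ exists.
   Context: A path category is a category with two classes of maps, fibrations and weak equivalences, such that: fibrations are closed under composition and contain the isomorphisms; pullbacks of fibrations along arbitrary maps exist and are fibrations; there is a terminal object and every map to it is a fibration; isomorphisms are weak equivalences; weak equivalences satisfy 2-out-of-6; every object $X$ has a path object, a factorisation of the diagonal as a weak equivalence $X \to PX$ followed by a fibration $(s,t): PX \to X\times X$; pullbacks of trivial fibrations are trivial fibrations; every trivial fibration has a section. For a fibration $p: Y \to A$ one similarly factors $Y \to Y\times_A Y$ to get a fibrewise path object $P_A Y$, and two maps $m, m': D \to Y$ over $A$ are fibrewise homotopic ($m \simeq_A m'$) if there is $H: D \to P_A Y$ with $(s,t)H = (m,m')$. Homotopy $\Pi$-types: given fibrations $g: C \to B$ and $f: B \to A$, a weak homotopy $\Pi$-type $\Pi_f(g)$ is a fibration $\pi: \Pi \to A$ with a map $\varepsilon: \Pi\times_A B \to C$ satisfying $g\varepsilon = $ the projection to $B$, such that for every map $h: D \to A$ and every $m: D\times_A B \to C$ with $gm$ equal to the projection to $B$, there is $k: D \to \Pi$ with $\pi k = h$ and $\varepsilon\circ(k\times_A B) \simeq_B m$; it is strong if moreover for any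 $k, k': D \to \Pi$ over $A$ with $\varepsilon(k\times_A B) \simeq_B \varepsilon(k'\times_A B)$ we have $k \simeq_A k'$. A class $\mathcal{D}$ of fibrations is a class of display maps with weak (strong) homotopy $\Pi$-types if: every identity map lies in $\mathcal{D}$; the pullback of a map in $\mathcal{D}$ along any map can be found in $\mathcal{D}$; and for all composable $d: X \to I$, $e: I \to J$ in $\mathcal{D}$ a weak (strong) homotopy $\Pi$-type $\Pi_e(d)$ exists and can be found in $\mathcal{D}$. *)

theory Defs
  imports Main
begin

record ('o,'m) cat =
  Ob :: "'o set"
  Ar :: "'m set"
  Dom :: "'m \<Rightarrow> 'o"
  Cod :: "'m \<Rightarrow> 'o"
  cmp :: "'m \<Rightarrow> 'm \<Rightarrow> 'm"   (* cmp C g f = g \<circ> f *)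
  ident :: "'o \<Rightarrow> 'm"

definition Hom :: "('o,'m) cat \<Rightarrow> 'o \<Rightarrow> 'o \<Rightarrow> 'm set" where
  "Hom C X Y = {f \<in> Ar C. Dom C f = X \<and> Cod C f = Y}"

definition category :: "('o,'m) cat \<Rightarrow> bool" where
  "category C \<longleftrightarrow>
     (\<forall>f \<in> Ar C. Dom C f \<in> Ob C \<and> Cod C f \<in> Ob C) \<and>
     (\<forall>X \<in> Ob C. ident C X \<in> Hom C X X) \<and>
     (\<forall>X Y Z f g. f \<in> Hom C X Y \<and> g \<in> Hom C Y Z \<longrightarrow> cmp C g f \<in> Hom C X Z) \<and>
     (\<forall>f \<in> Ar C. cmp C (ident C (Cod C f)) f = f \<and> cmp C f (ident C (Dom C f)) = f) \<and>
     (\<forall>f g h. f \<in> Ar C \<and> g \<in> Ar C \<and> h \<in> Ar C \<and> Cod C f = Dom C g \<and> Cod C g = Dom C h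
        \<longrightarrow> cmp C h (cmp C g f) = cmp C (cmp C h g) f)"

definition iso :: "('o,'m) cat \<Rightarrow> 'm \<Rightarrow> bool" where
  "iso C f \<longleftrightarrow> f \<in> Ar C \<and>
     (\<exists>g \<in> Hom C (Cod C f) (Dom C f).
        cmp C g f = ident C (Dom C f) \<and> cmp C f g = ident C (Cod C f))"

definition terminal :: "('o,'m) cat \<Rightarrow> 'o \<Rightarrow> bool" where
  "terminal C T \<longleftrightarrow> T \<in> Ob C \<and> (\<forall>X \<in> Ob C. \<exists>!t. t \<in> Hom C X T)"

text \<open>Then p1 is the
  pullback of g along f.\<close>
definition pullback :: "('o,'m) cat \<Rightarrow> 'm \<Rightarrow> 'm \<Rightarrow> 'o \<Rightarrow> 'm \<Rightarrow> 'm \<Rightarrow> bool" where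
  "pullback C f g P p1 p2 \<longleftrightarrow>
     f \<in> Ar C \<and> g \<in> Ar C \<and> Cod C f = Cod C g \<and>
     p1 \<in> Hom C P (Dom C f) \<and> p2 \<in> Hom C P (Dom C g) \<and>
     cmp C f p1 = cmp C g p2 \<and>
     (\<forall>Q a b. a \<in> Hom C Q (Dom C f) \<and> b \<in> Hom C Q (Dom C g) \<and> cmp C f a = cmp C g b
        \<longrightarrow> (\<exists>!u. u \<in> Hom C Q P \<and> cmp C p1 u = a \<and> cmp C p2 u = b))"

definition product :: "('o,'m) cat \<Rightarrow> 'o \<Rightarrow> 'o \<Rightarrow> 'o \<Rightarrow> 'm \<Rightarrow> 'm \<Rightarrow> bool" where
  "product C X Y P p1 p2 \<longleftrightarrow>
     X \<in> Ob C \<and> Y \<in> Ob C \<and> p1 \<in> Hom C P X \<and> p2 \<in> Hom C P Y \<and>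
     (\<forall>Q a b. a \<in> Hom C Q X \<and> b \<in> Hom C Q Y
        \<longrightarrow> (\<exists>!u. u \<in> Hom C Q P \<and> cmp C p1 u = a \<and> cmp C p2 u = b))"

definition path_category :: "('o,'m) cat \<Rightarrow> 'm set \<Rightarrow> 'm set \<Rightarrow> bool" where
  "path_category C fib weq \<longleftrightarrow>
     category C \<and> fib \<subseteq> Ar C \<and> weq \<subseteq> Ar C \<and>
     \<comment> \<open>fibrations closed under composition and contain the isomorphisms\<close>
     (\<forall>f g. f \<in> fib \<and> g \<in> fib \<and> Cod C f = Dom C g \<longrightarrow> cmp C g f \<in> fib) \<and>
     (\<forall>f. iso C f \<longrightarrow> f \<in> fib) \<and>
     \<comment> \<open>pullbacks of fibrations along arbitrary maps exist and are fibrations\<close>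
     (\<forall>f g. g \<in> fib \<and> f \<in> Ar C \<and> Cod C f = Cod C g \<longrightarrow> (\<exists>P p1 p2. pullback C f g P p1 p2)) \<and>
     (\<forall>f g P p1 p2. g \<in> fib \<and> pullback C f g P p1 p2 \<longrightarrow> p1 \<in> fib) \<and>
     \<comment> \<open>terminal object, every map to it is a fibration\<close>
     (\<exists>T. terminal C T \<and> (\<forall>X \<in> Ob C. \<forall>t \<in> Hom C X T. t \<in> fib)) \<and>
     \<comment> \<open>isomorphisms are weak equivalences\<close>
     (\<forall>f. iso C f \<longrightarrow> f \<in> weq) \<and>
     \<comment> \<open>2-out-of-6\<close>
     (\<forall>f g h. f \<in> Ar C \<and> g \<in> Ar C \<and> h \<in> Ar C \<and> Cod C f = Dom C g \<and> Cod C g = Dom C h \<and>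
        cmp C g f \<in> weq \<and> cmp C h g \<in> weq
        \<longrightarrow> f \<in> weq \<and> g \<in> weq \<and> h \<in> weq \<and> cmp C h (cmp C g f) \<in> weq) \<and>
     \<comment> \<open>path objects: X \<rightarrow> PX (weq) followed by (s,t) : PX \<rightarrow> X \<times> X (fib)\<close>
     (\<forall>X \<in> Ob C. \<exists>PX r XX q1 q2 st.
        r \<in> Hom C X PX \<and> r \<in> weq \<and> product C X X XX q1 q2 \<and>
        st \<in> Hom C PX XX \<and> st \<in> fib \<and>
        cmp C q1 (cmp C st r) = ident C X \<and> cmp C q2 (cmp C st r) = ident C X) \<and>
     \<comment> \<open>pullbacks of trivial fibrations are trivial fibrations\<close>
     (\<forall>f g P p1 p2. g \<in> fib \<and> g \<in> weq \<and> pullback C f g P p1 p2 \<longrightarrow> p1 \<in> fib \<and> p1 \<in> weq) \<and>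
     \<comment> \<open>every trivial fibration has a section\<close>
     (\<forall>p. p \<in> fib \<and> p \<in> weq \<longrightarrow>
        (\<exists>s \<in> Hom C (Cod C p) (Dom C p). cmp C p s = ident C (Cod C p)))"

text \<open>Fibrewise path object for a fibration p : Y \<rightarrow> A: Y \<rightarrow> P_A Y (weq) followed by
  (s,t) : P_A Y \<rightarrow> Y \<times>_A Y (fib), where (YY, q1, q2) is a pullback of p along p.\<close>
definition fpath_obj :: "('o,'m) cat \<Rightarrow> 'm set \<Rightarrow> 'm set \<Rightarrow> 'm \<Rightarrow> 'o \<Rightarrow> 'm \<Rightarrow> 'm \<Rightarrow> 'o \<Rightarrow> 'm \<Rightarrow> 'm \<Rightarrow> bool" where
  "fpath_obj C fib weq p PY r st YY q1 q2 \<longleftrightarrow>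
     p \<in> fib \<and> pullback C p p YY q1 q2 \<and>
     r \<in> Hom C (Dom C p) PY \<and> r \<in> weq \<and> st \<in> Hom C PY YY \<and> st \<in> fib \<and>
     cmp C q1 (cmp C st r) = ident C (Dom C p) \<and> cmp C q2 (cmp C st r) = ident C (Dom C p)"

definition fhtpy :: "('o,'m) cat \<Rightarrow> 'm set \<Rightarrow> 'm set \<Rightarrow> 'm \<Rightarrow> 'm \<Rightarrow> 'm \<Rightarrow> bool" where
  "fhtpy C fib weq p m m' \<longleftrightarrow>
     m \<in> Hom C (Dom C m) (Dom C p) \<and> m' \<in> Hom C (Dom C m) (Dom C p) \<and>
     cmp C p m = cmp C p m' \<and>
     (\<exists>PY r st YY q1 q2 H. fpath_obj C fib weq p PY r st YY q1 q2 \<and>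
        H \<in> Hom C (Dom C m) PY \<and>
        cmp C q1 (cmp C st H) = m \<and> cmp C q2 (cmp C st H) = m')"

text \<open>For h : D \<rightarrow> A and a pullback (R,d1,d2) = D \<times>_A B, the map k \<times>_A B is the
  (unique) u : R \<rightarrow> Q with q1 u = k d1, q2 u = d2.\<close>
definition is_pi :: "('o,'m) cat \<Rightarrow> 'm set \<Rightarrow> 'm set \<Rightarrow> bool \<Rightarrow> 'm \<Rightarrow> 'm \<Rightarrow>
                     'o \<Rightarrow> 'm \<Rightarrow> 'o \<Rightarrow> 'm \<Rightarrow> 'm \<Rightarrow> 'm \<Rightarrow> bool" where
  "is_pi C fib weq strong g f Pi \<pi> Q q1 q2 \<epsilon> \<longleftrightarrow>
     g \<in> fib \<and> f \<in> fib \<and> Cod C g = Dom C f \<and>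
     \<pi> \<in> fib \<and> \<pi> \<in> Hom C Pi (Cod C f) \<and>
     pullback C \<pi> f Q q1 q2 \<and>
     \<epsilon> \<in> Hom C Q (Dom C g) \<and> cmp C g \<epsilon> = q2 \<and>
     \<comment> \<open>weak universal property\<close>
     (\<forall>D h R d1 d2 m.
        h \<in> Hom C D (Cod C f) \<and> pullback C h f R d1 d2 \<and>
        m \<in> Hom C R (Dom C g) \<and> cmp C g m = d2 \<longrightarrow>
        (\<exists>k \<in> Hom C D Pi. cmp C \<pi> k = h \<and>
           (\<forall>u. u \<in> Hom C R Q \<and> cmp C q1 u = cmp C k d1 \<and> cmp C q2 u = d2 \<longrightarrow>
                fhtpy C fib weq g (cmp C \<epsilon> u) m))) \<and>
     \<comment> \<open>strong: uniqueness up to fibrewise homotopy\<close>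
     (strong \<longrightarrow>
       (\<forall>D h R d1 d2 k k' u u'.
          h \<in> Hom C D (Cod C f) \<and> pullback C h f R d1 d2 \<and>
          k \<in> Hom C D Pi \<and> k' \<in> Hom C D Pi \<and> cmp C \<pi> k = h \<and> cmp C \<pi> k' = h \<and>
          u \<in> Hom C R Q \<and> cmp C q1 u = cmp C k d1 \<and> cmp C q2 u = d2 \<and>
          u' \<in> Hom C R Q \<and> cmp C q1 u' = cmp C k' d1 \<and> cmp C q2 u' = d2 \<and>
          fhtpy C fib weq g (cmp C \<epsilon> u) (cmp C \<epsilon> u')
          \<longrightarrow> fhtpy C fib weq \<pi> k k'))"

definition has_pi :: "('o,'m) cat \<Rightarrow> 'm set \<Rightarrow> 'm set \<Rightarrow> bool \<Rightarrow> 'm \<Rightarrow> 'm \<Rightarrow> bool" where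
  "has_pi C fib weq strong g f \<longleftrightarrow>
     (\<exists>Pi \<pi> Q q1 q2 \<epsilon>. is_pi C fib weq strong g f Pi \<pi> Q q1 q2 \<epsilon>)"

definition display_class :: "('o,'m) cat \<Rightarrow> 'm set \<Rightarrow> 'm set \<Rightarrow> bool \<Rightarrow> 'm set \<Rightarrow> bool" where
  "display_class C fib weq strong \<D> \<longleftrightarrow>
     \<D> \<subseteq> fib \<and>
     (\<forall>X \<in> Ob C. ident C X \<in> \<D>) \<and>
     (\<forall>d \<in> \<D>. \<forall>h \<in> Ar C. Cod C h = Cod C d \<longrightarrow>
        (\<exists>P p1 p2. pullback C h d P p1 p2 \<and> p1 \<in> \<D>)) \<and>
     (\<forall>d e. d \<in> \<D> \<and> e \<in> \<D> \<and> Cod C d = Dom C e \<longrightarrow>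
        (\<exists>Pi \<pi> Q q1 q2 \<epsilon>. is_pi C fib weq strong d e Pi \<pi> Q q1 q2 \<epsilon> \<and> \<pi> \<in> \<D>))"

inductive_set comp_closure :: "('o,'m) cat \<Rightarrow> 'm set \<Rightarrow> 'm set" for C :: "('o,'m) cat" and \<D> :: "'m set" where
  base: "d \<in> \<D> \<Longrightarrow> d \<in> comp_closure C \<D>"
| comp: "f \<in> comp_closure C \<D> \<Longrightarrow> g \<in> comp_closure C \<D> \<Longrightarrow> Cod C f = Dom C g \<Longrightarrow>
         cmp C g f \<in> comp_closure C \<D>"

end

theory Submission
  imports Defs
begin

locale pc =
  fixes C :: "('o,'m) cat" and fib weq :: "'m set"
  assumes PC: "path_category C fib weq"
begin

abbreviation cc (infixr "\<cdot>" 55) where "g \<cdot> f \<equiv> cmp C g f"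

lemmas PCD = PC[unfolded path_category_def]
lemma cat: "category C" using PCD by (rule conjunct1)
lemma fib_Ar0: "fib \<subseteq> Ar C" using PCD[THEN conjunct2] by (rule conjunct1)
lemma fib_Ar: "f \<in> fib \<Longrightarrow> f \<in> Ar C" using fib_Ar0 by blast
lemma weq_Ar0: "weq \<subseteq> Ar C" using PCD[THEN conjunct2, THEN conjunct2] by (rule conjunct1)
lemma fib_comp0: "\<forall>f g. f \<in> fib \<and> g \<in> fib \<and> Cod C f = Dom C g \<longrightarrow> cmp C g f \<in> fib"
  using PCD[THEN conjunct2, THEN conjunct2, THEN conjunct2] by (rule conjunct1)
lemma fib_comp: "f \<in> fib \<Longrightarrow> g \<in> fib \<Longrightarrow> Cod C f = Dom C g \<Longrightarrow> g \<cdot> f \<in> fib"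
  using fib_comp0 by blast
lemmas PCD4 = PCD[THEN conjunct2, THEN conjunct2, THEN conjunct2, THEN conjunct2]
lemma iso_fib0: "\<forall>f. iso C f \<longrightarrow> f \<in> fib" using PCD4 by (rule conjunct1)
lemma pb_ex0: "\<forall>f g. g \<in> fib \<and> f \<in> Ar C \<and> Cod C f = Cod C g \<longrightarrow> (\<exists>P p1 p2. pullback C f g P p1 p2)"
  using PCD4[THEN conjunct2] by (rule conjunct1)
lemma pb_ex: "g \<in> fib \<Longrightarrow> f \<in> Ar C \<Longrightarrow> Cod C f = Cod C g \<Longrightarrow> \<exists>P p1 p2. pullback C f g P p1 p2"
  using pb_ex0 by blast
lemma pb_fib0: "\<forall>f g P p1 p2. g \<in> fib \<and> pullback C f g P p1 p2 \<longrightarrow> p1 \<in> fib"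
  using PCD4[THEN conjunct2, THEN conjunct2] by (rule conjunct1)
lemma pb_fib: "g \<in> fib \<Longrightarrow> pullback C f g P p1 p2 \<Longrightarrow> p1 \<in> fib"
  using pb_fib0 by blast
lemmas PCD7 = PCD4[THEN conjunct2, THEN conjunct2, THEN conjunct2]
lemma terminal: "\<exists>T. terminal C T \<and> (\<forall>X \<in> Ob C. \<forall>t \<in> Hom C X T. t \<in> fib)"
  using PCD7 by (rule conjunct1)
lemma iso_weq0: "\<forall>f. iso C f \<longrightarrow> f \<in> weq" using PCD7[THEN conjunct2] by (rule conjunct1)
lemma iso_weq: "iso C f \<Longrightarrow> f \<in> weq" using iso_weq0 by blast
lemma two_six0: "\<forall>f g h. f \<in> Ar C \<and> g \<in> Ar C \<and> h \<in> Ar C \<and> Cod C f = Dom C g \<and> Cod C g = Dom C h \<and>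
        cmp C g f \<in> weq \<and> cmp C h g \<in> weq
        \<longrightarrow> f \<in> weq \<and> g \<in> weq \<and> h \<in> weq \<and> cmp C h (cmp C g f) \<in> weq"
  using PCD7[THEN conjunct2, THEN conjunct2] by (rule conjunct1)
lemma two_six: "f \<in> Ar C \<Longrightarrow> g \<in> Ar C \<Longrightarrow> h \<in> Ar C \<Longrightarrow> Cod C f = Dom C g \<Longrightarrow> Cod C g = Dom C h \<Longrightarrow>
        g \<cdot> f \<in> weq \<Longrightarrow> h \<cdot> g \<in> weq \<Longrightarrow> f \<in> weq \<and> g \<in> weq \<and> h \<in> weq \<and> h \<cdot> (g \<cdot> f) \<in> weq"
  using two_six0 by blast
lemmas PCD10 = PCD7[THEN conjunct2, THEN conjunct2, THEN conjunct2]
lemma path_obj0: "\<forall>X \<in> Ob C. \<exists>PX r XX q1 q2 st.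
        r \<in> Hom C X PX \<and> r \<in> weq \<and> product C X X XX q1 q2 \<and>
        st \<in> Hom C PX XX \<and> st \<in> fib \<and>
        cmp C q1 (cmp C st r) = ident C X \<and> cmp C q2 (cmp C st r) = ident C X"
  using PCD10 by (rule conjunct1)
lemma path_obj: "X \<in> Ob C \<Longrightarrow> \<exists>PX r XX q1 q2 st.
        r \<in> Hom C X PX \<and> r \<in> weq \<and> product C X X XX q1 q2 \<and>
        st \<in> Hom C PX XX \<and> st \<in> fib \<and>
        q1 \<cdot> (st \<cdot> r) = ident C X \<and> q2 \<cdot> (st \<cdot> r) = ident C X"
  using path_obj0 by blast
lemma pb_triv0: "\<forall>f g P p1 p2. g \<in> fib \<and> g \<in> weq \<and> pullback C f g P p1 p2 \<longrightarrow> p1 \<in> fib \<and> p1 \<in> weq"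
  using PCD10[THEN conjunct2] by (rule conjunct1)
lemma pb_triv: "g \<in> fib \<Longrightarrow> g \<in> weq \<Longrightarrow> pullback C f g P p1 p2 \<Longrightarrow> p1 \<in> fib \<and> p1 \<in> weq"
  using pb_triv0 by blast
lemma triv_sec0: "\<forall>p. p \<in> fib \<and> p \<in> weq \<longrightarrow>
        (\<exists>s \<in> Hom C (Cod C p) (Dom C p). cmp C p s = ident C (Cod C p))"
  using PCD10[THEN conjunct2] by (rule conjunct2)
lemma triv_sec: "p \<in> fib \<Longrightarrow> p \<in> weq \<Longrightarrow> \<exists>s \<in> Hom C (Cod C p) (Dom C p). p \<cdot> s = ident C (Cod C p)"
  using triv_sec0 by blast

lemma HomI: "f \<in> Ar C \<Longrightarrow> f \<in> Hom C (Dom C f) (Cod C f)" by (simp add: Hom_def)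
lemma HomD: "f \<in> Hom C X Y \<Longrightarrow> f \<in> Ar C \<and> Dom C f = X \<and> Cod C f = Y" by (simp add: Hom_def)

lemma Hom_comp: "f \<in> Hom C X Y \<Longrightarrow> g \<in> Hom C Y Z \<Longrightarrow> g \<cdot> f \<in> Hom C X Z"
  using cat unfolding category_def by blast
lemma ident_Hom: "X \<in> Ob C \<Longrightarrow> ident C X \<in> Hom C X X"
  using cat unfolding category_def by blast
lemma cat_Ob: "\<forall>f \<in> Ar C. Dom C f \<in> Ob C \<and> Cod C f \<in> Ob C" using cat unfolding category_def by blast
lemma cat_id: "\<forall>f \<in> Ar C. cmp C (ident C (Cod C f)) f = f \<and> cmp C f (ident C (Dom C f)) = f"
  using cat unfolding category_def by blast
lemma cat_assoc: "\<forall>f g h. f \<in> Ar C \<and> g \<in> Ar C \<and> h \<in> Ar C \<and> Cod C f = Dom C g \<and> Cod C g = Dom C h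
        \<longrightarrow> cmp C h (cmp C g f) = cmp C (cmp C h g) f" using cat unfolding category_def by blast
lemma Dom_Ob: "f \<in> Hom C X Y \<Longrightarrow> X \<in> Ob C"
  using cat_Ob unfolding Hom_def by blast
lemma Cod_Ob: "f \<in> Hom C X Y \<Longrightarrow> Y \<in> Ob C"
  using cat_Ob unfolding Hom_def by blast
lemma assoc: "f \<in> Hom C X Y \<Longrightarrow> g \<in> Hom C Y Z \<Longrightarrow> h \<in> Hom C Z W \<Longrightarrow> (h \<cdot> g) \<cdot> f = h \<cdot> (g \<cdot> f)"
  using cat_assoc unfolding Hom_def by simp
lemma id_l: "f \<in> Hom C X Y \<Longrightarrow> ident C Y \<cdot> f = f"
  using cat_id unfolding Hom_def by auto
lemma id_r: "f \<in> Hom C X Y \<Longrightarrow> f \<cdot> ident C X = f"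
  using cat_id unfolding Hom_def by auto

lemma cong_r: "a \<cdot> b = c \<cdot> d \<Longrightarrow> x \<in> Hom C W X \<Longrightarrow> b \<in> Hom C X Y \<Longrightarrow> a \<in> Hom C Y Z
   \<Longrightarrow> d \<in> Hom C X Y' \<Longrightarrow> c \<in> Hom C Y' Z \<Longrightarrow> a \<cdot> (b \<cdot> x) = c \<cdot> (d \<cdot> x)"
proof -
  assume a: "a \<cdot> b = c \<cdot> d" "x \<in> Hom C W X" "b \<in> Hom C X Y" "a \<in> Hom C Y Z"
    "d \<in> Hom C X Y'" "c \<in> Hom C Y' Z"
  have "a \<cdot> (b \<cdot> x) = (a \<cdot> b) \<cdot> x" using assoc a by metis
  also have "\<dots> = (c \<cdot> d) \<cdot> x" using a by simp
  also have "\<dots> = c \<cdot> (d \<cdot> x)" using assoc a by metis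
  finally show ?thesis .
qed

lemma ident_iso: "X \<in> Ob C \<Longrightarrow> iso C (ident C X)"
proof -
  assume X: "X \<in> Ob C"
  have h: "ident C X \<in> Hom C X X" using X by (rule ident_Hom)
  have e: "ident C X \<cdot> ident C X = ident C X" using id_l[OF h] .
  show ?thesis unfolding iso_def using h e HomD[OF h] by auto
qed
lemma ident_weq: "X \<in> Ob C \<Longrightarrow> ident C X \<in> weq" using ident_iso iso_weq by blast

lemma weq_comp: "f \<in> Hom C X Y \<Longrightarrow> g \<in> Hom C Y Z \<Longrightarrow> f \<in> weq \<Longrightarrow> g \<in> weq \<Longrightarrow> g \<cdot> f \<in> weq"
proof -
  assume a: "f \<in> Hom C X Y" "g \<in> Hom C Y Z" "f \<in> weq" "g \<in> weq"
  have Y: "Y \<in> Ob C" using a Cod_Ob by blast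
  have 1: "ident C Y \<cdot> f = f" "g \<cdot> ident C Y = g" using a id_l id_r by blast+
  have "ident C Y \<in> Hom C Y Y" using Y by (rule ident_Hom)
  with two_six[of f "ident C Y" g] a 1 HomD show ?thesis by metis
qed
lemma weq_cancel_l: "f \<in> Hom C X Y \<Longrightarrow> g \<in> Hom C Y Z \<Longrightarrow> g \<cdot> f \<in> weq \<Longrightarrow> g \<in> weq \<Longrightarrow> f \<in> weq"
proof -
  assume a: "f \<in> Hom C X Y" "g \<in> Hom C Y Z" "g \<cdot> f \<in> weq" "g \<in> weq"
  have "ident C Z \<cdot> g = g" using a id_l by blast
  with two_six[of f g "ident C Z"] a show ?thesis using HomD Cod_Ob ident_Hom by metis
qed
lemma weq_cancel_r: "f \<in> Hom C X Y \<Longrightarrow> g \<in> Hom C Y Z \<Longrightarrow> g \<cdot> f \<in> weq \<Longrightarrow> f \<in> weq \<Longrightarrow> g \<in> weq"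
proof -
  assume a: "f \<in> Hom C X Y" "g \<in> Hom C Y Z" "g \<cdot> f \<in> weq" "f \<in> weq"
  have "f \<cdot> ident C X = f" using a id_r by blast
  with two_six[of "ident C X" f g] a show ?thesis using HomD Dom_Ob ident_Hom by metis
qed

lemma pbD: "pullback C f g P p1 p2 \<Longrightarrow> f \<in> Hom C (Dom C f) (Cod C f) \<and> g \<in> Hom C (Dom C g) (Cod C f) \<and>
   p1 \<in> Hom C P (Dom C f) \<and> p2 \<in> Hom C P (Dom C g) \<and> f \<cdot> p1 = g \<cdot> p2"
  unfolding pullback_def Hom_def by auto

lemma pb_ind: "pullback C f g P p1 p2 \<Longrightarrow> a \<in> Hom C Q (Dom C f) \<Longrightarrow> b \<in> Hom C Q (Dom C g) \<Longrightarrow> f \<cdot> a = g \<cdot> b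
  \<Longrightarrow> \<exists>u. u \<in> Hom C Q P \<and> p1 \<cdot> u = a \<and> p2 \<cdot> u = b"
  unfolding pullback_def by blast

lemma pb_uniq: assumes pb: "pullback C f g P p1 p2" and u: "u \<in> Hom C Q P" and u': "u' \<in> Hom C Q P"
  and e1: "p1 \<cdot> u = p1 \<cdot> u'" and e2: "p2 \<cdot> u = p2 \<cdot> u'" shows "u = u'"
proof -
  have D: "f \<in> Hom C (Dom C f) (Cod C f)" "g \<in> Hom C (Dom C g) (Cod C f)"
   "p1 \<in> Hom C P (Dom C f)" "p2 \<in> Hom C P (Dom C g)" "f \<cdot> p1 = g \<cdot> p2" using pbD[OF pb] by auto
  have a: "p1 \<cdot> u \<in> Hom C Q (Dom C f)" "p2 \<cdot> u \<in> Hom C Q (Dom C g)" using D u Hom_comp by auto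
  have c: "f \<cdot> (p1 \<cdot> u) = g \<cdot> (p2 \<cdot> u)" using cong_r[OF D(5) u D(3) D(1) D(4) D(2)] .
  have "\<exists>!v. v \<in> Hom C Q P \<and> p1 \<cdot> v = p1 \<cdot> u \<and> p2 \<cdot> v = p2 \<cdot> u"
    using pb a c unfolding pullback_def by blast
  then show ?thesis using u u' e1 e2 by metis
qed

lemma prod_ind: "product C X Y P p1 p2 \<Longrightarrow> a \<in> Hom C Q X \<Longrightarrow> b \<in> Hom C Q Y
  \<Longrightarrow> \<exists>u. u \<in> Hom C Q P \<and> p1 \<cdot> u = a \<and> p2 \<cdot> u = b"
  unfolding product_def by blast

lemma prodD: "product C X Y P p1 p2 \<Longrightarrow> p1 \<in> Hom C P X \<and> p2 \<in> Hom C P Y"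
  unfolding product_def by blast

lemma prod_uniq: assumes pr: "product C X Y P p1 p2" and u: "u \<in> Hom C Q P" and u': "u' \<in> Hom C Q P"
  and e1: "p1 \<cdot> u = p1 \<cdot> u'" and e2: "p2 \<cdot> u = p2 \<cdot> u'" shows "u = u'"
proof -
  have a: "p1 \<cdot> u \<in> Hom C Q X" "p2 \<cdot> u \<in> Hom C Q Y" using prodD[OF pr] u Hom_comp by auto
  have "\<exists>!v. v \<in> Hom C Q P \<and> p1 \<cdot> v = p1 \<cdot> u \<and> p2 \<cdot> v = p2 \<cdot> u"
    using pr a unfolding product_def by blast
  then show ?thesis using u u' e1 e2 by metis
qed

lemma term_uniq: "terminal C T \<Longrightarrow> a \<in> Hom C X T \<Longrightarrow> b \<in> Hom C X T \<Longrightarrow> a = b"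
  unfolding terminal_def using Dom_Ob by blast
lemma term_ex: "terminal C T \<Longrightarrow> X \<in> Ob C \<Longrightarrow> \<exists>t. t \<in> Hom C X T"
  unfolding terminal_def by blast

lemma prod_pb: assumes pr: "product C X Y P p1 p2" and T: "terminal C T"
  and tX: "tX \<in> Hom C X T" and tY: "tY \<in> Hom C Y T"
  shows "pullback C tX tY P p1 p2"
proof -
  have D: "p1 \<in> Hom C P X" "p2 \<in> Hom C P Y" using prodD[OF pr] by auto
  have eq: "tX \<cdot> p1 = tY \<cdot> p2" using term_uniq[OF T] D tX tY Hom_comp by blast
  have U: "\<forall>Q a b. a \<in> Hom C Q X \<and> b \<in> Hom C Q Y
        \<longrightarrow> (\<exists>!u. u \<in> Hom C Q P \<and> p1 \<cdot> u = a \<and> p2 \<cdot> u = b)"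
    using pr unfolding product_def by (elim conjE)
  have h: "Dom C tX = X" "Dom C tY = Y" "Cod C tX = T" "Cod C tY = T" "tX \<in> Ar C" "tY \<in> Ar C"
    using tX tY HomD by auto
  show ?thesis unfolding pullback_def h using U D eq h(5,6) by simp
qed

lemma prod_Ob: "product C X Y P p1 p2 \<Longrightarrow> X \<in> Ob C \<and> Y \<in> Ob C"
  unfolding product_def by (elim conjE, intro conjI)

lemma prod_fib: assumes pr: "product C X Y P p1 p2" shows "p1 \<in> fib \<and> p2 \<in> fib"
proof -
  obtain T where T: "terminal C T" and Tf: "\<forall>X \<in> Ob C. \<forall>t \<in> Hom C X T. t \<in> fib" using terminal by blast
  have X: "X \<in> Ob C" and Y: "Y \<in> Ob C" using prod_Ob[OF pr] by auto
  obtain tX tY where tX: "tX \<in> Hom C X T" and tY: "tY \<in> Hom C Y T" using term_ex[OF T] X Y by blast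
  have pr': "product C Y X P p2 p1" using pr unfolding product_def
  proof (elim conjE, intro conjI allI impI)
    fix Q a b assume U: "\<forall>Q a b. a \<in> Hom C Q X \<and> b \<in> Hom C Q Y \<longrightarrow> (\<exists>!u. u \<in> Hom C Q P \<and> p1 \<cdot> u = a \<and> p2 \<cdot> u = b)"
      and ab: "a \<in> Hom C Q Y \<and> b \<in> Hom C Q X"
    then have "\<exists>!u. u \<in> Hom C Q P \<and> p1 \<cdot> u = b \<and> p2 \<cdot> u = a" by simp
    then show "\<exists>!u. u \<in> Hom C Q P \<and> p2 \<cdot> u = a \<and> p1 \<cdot> u = b" by (simp add: conj_commute)
  qed
  have "pullback C tX tY P p1 p2" using prod_pb[OF pr T tX tY] .
  moreover have "pullback C tY tX P p2 p1" using prod_pb[OF pr' T tY tX] .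
  moreover have "tX \<in> fib" "tY \<in> fib" using Tf tX tY X Y by auto
  ultimately show ?thesis using pb_fib by metis
qed

lemma prod_ex: assumes X: "X \<in> Ob C" and Y: "Y \<in> Ob C" shows "\<exists>P p1 p2. product C X Y P p1 p2"
proof -
  obtain T where T: "terminal C T" and Tf: "\<forall>X \<in> Ob C. \<forall>t \<in> Hom C X T. t \<in> fib" using terminal by blast
  obtain tX tY where tX: "tX \<in> Hom C X T" and tY: "tY \<in> Hom C Y T" using term_ex[OF T] X Y by blast
  have "tY \<in> fib" using Tf tY Y by blast
  then obtain P p1 p2 where pb: "pullback C tX tY P p1 p2" using pb_ex tX tY HomD by metis
  have D: "p1 \<in> Hom C P X" "p2 \<in> Hom C P Y" using pbD[OF pb] tX tY HomD by auto
  have "product C X Y P p1 p2" unfolding product_def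
  proof (intro conjI X Y D allI impI)
    fix Q a b assume ab: "a \<in> Hom C Q X \<and> b \<in> Hom C Q Y"
    have "tX \<cdot> a = tY \<cdot> b" using term_uniq[OF T] ab tX tY Hom_comp by blast
    moreover have U: "\<forall>Q a b. a \<in> Hom C Q (Dom C tX) \<and> b \<in> Hom C Q (Dom C tY) \<and> cmp C tX a = cmp C tY b
        \<longrightarrow> (\<exists>!u. u \<in> Hom C Q P \<and> cmp C p1 u = a \<and> cmp C p2 u = b)"
      using pb unfolding pullback_def by (elim conjE)
    moreover have "Dom C tX = X" "Dom C tY = Y" using tX tY HomD by auto
    ultimately show "\<exists>!u. u \<in> Hom C Q P \<and> p1 \<cdot> u = a \<and> p2 \<cdot> u = b"
      using ab by simp
  qed
  then show ?thesis by blast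
qed

lemma comp_Ar_s: "f \<in> Ar C \<Longrightarrow> g \<in> Ar C \<Longrightarrow> Cod C f = Dom C g \<Longrightarrow> g \<cdot> f \<in> Ar C"
  using Hom_comp HomI HomD by metis
lemma Dom_comp_s: "f \<in> Ar C \<Longrightarrow> g \<in> Ar C \<Longrightarrow> Cod C f = Dom C g \<Longrightarrow> Dom C (g \<cdot> f) = Dom C f"
  using Hom_comp HomI HomD by metis
lemma Cod_comp_s: "f \<in> Ar C \<Longrightarrow> g \<in> Ar C \<Longrightarrow> Cod C f = Dom C g \<Longrightarrow> Cod C (g \<cdot> f) = Cod C g"
  using Hom_comp HomI HomD by metis
lemma assoc_s: "f \<in> Ar C \<Longrightarrow> g \<in> Ar C \<Longrightarrow> h \<in> Ar C \<Longrightarrow> Cod C f = Dom C g \<Longrightarrow> Cod C g = Dom C h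
   \<Longrightarrow> (h \<cdot> g) \<cdot> f = h \<cdot> (g \<cdot> f)"
  using cat_assoc by metis
lemma idl_s: "f \<in> Ar C \<Longrightarrow> Cod C f = Y \<Longrightarrow> ident C Y \<cdot> f = f" using cat_id by blast
lemma idr_s: "f \<in> Ar C \<Longrightarrow> Dom C f = X \<Longrightarrow> f \<cdot> ident C X = f" using cat_id by blast
lemma ident_Ar_s: "X \<in> Ob C \<Longrightarrow> ident C X \<in> Ar C" using ident_Hom HomD by blast
lemma ident_Dom_s: "X \<in> Ob C \<Longrightarrow> Dom C (ident C X) = X" using ident_Hom HomD by blast
lemma ident_Cod_s: "X \<in> Ob C \<Longrightarrow> Cod C (ident C X) = X" using ident_Hom HomD by blast

lemmas cs = comp_Ar_s Dom_comp_s Cod_comp_s assoc_s idl_s idr_s Hom_def ident_Ar_s ident_Dom_s ident_Cod_s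

lemma ext: "a \<cdot> b = e \<Longrightarrow> b \<in> Ar C \<Longrightarrow> a \<in> Ar C \<Longrightarrow> e \<in> Ar C
  \<Longrightarrow> Cod C b = Dom C a \<Longrightarrow> x \<in> Ar C \<Longrightarrow> Cod C x = Dom C b \<Longrightarrow> Dom C e = Dom C b
  \<Longrightarrow> a \<cdot> (b \<cdot> x) = e \<cdot> x"
  by (metis assoc_s)
lemma ext2: "a \<cdot> (b \<cdot> c) = e \<Longrightarrow> c \<in> Ar C \<Longrightarrow> b \<in> Ar C \<Longrightarrow> a \<in> Ar C \<Longrightarrow> e \<in> Ar C
  \<Longrightarrow> Cod C b = Dom C a \<Longrightarrow> Cod C c = Dom C b \<Longrightarrow> x \<in> Ar C \<Longrightarrow> Cod C x = Dom C c \<Longrightarrow> Dom C e = Dom C c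
  \<Longrightarrow> a \<cdot> (b \<cdot> (c \<cdot> x)) = e \<cdot> x"
  by (metis assoc_s comp_Ar_s Dom_comp_s Cod_comp_s)

lemma fact: assumes a: "a \<in> Hom C A E"
  shows "\<exists>Z i \<rho>. i \<in> Hom C A Z \<and> i \<in> weq \<and> \<rho> \<in> Hom C Z E \<and> \<rho> \<in> fib \<and> \<rho> \<cdot> i = a"
proof -
  have Eo: "E \<in> Ob C" and Ao: "A \<in> Ob C" using a Cod_Ob Dom_Ob by auto
  obtain PE r EE x1 x2 st where r: "r \<in> Hom C E PE" "r \<in> weq" and pE: "product C E E EE x1 x2"
    and st: "st \<in> Hom C PE EE" "st \<in> fib" and rs: "x1 \<cdot> (st \<cdot> r) = ident C E" "x2 \<cdot> (st \<cdot> r) = ident C E"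
    using path_obj[OF Eo] by blast
  obtain AE y1 y2 where pA: "product C A E AE y1 y2" using prod_ex[OF Ao Eo] by blast
  have x: "x1 \<in> Hom C EE E" "x2 \<in> Hom C EE E" "x1 \<in> fib" "x2 \<in> fib" using prodD[OF pE] prod_fib[OF pE] by auto
  have y: "y1 \<in> Hom C AE A" "y2 \<in> Hom C AE E" "y1 \<in> fib" "y2 \<in> fib" using prodD[OF pA] prod_fib[OF pA] by auto
  obtain m where m: "m \<in> Hom C AE EE" "x1 \<cdot> m = a \<cdot> y1" "x2 \<cdot> m = y2"
    using prod_ind[OF pE, of "a \<cdot> y1" AE y2] a y Hom_comp by blast
  obtain Z z1 z2 where pZ: "pullback C m st Z z1 z2" using pb_ex[of st m] st m HomD by metis
  have z: "z1 \<in> Hom C Z AE" "z2 \<in> Hom C Z PE" "m \<cdot> z1 = st \<cdot> z2" "z1 \<in> fib"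
    using pbD[OF pZ] m st HomD pb_fib[OF st(2) pZ] by auto
  define \<rho> where "\<rho> = y2 \<cdot> z1"
  have rho: "\<rho> \<in> Hom C Z E" "\<rho> \<in> fib" unfolding \<rho>_def using z y Hom_comp fib_comp HomD by auto
  obtain j where j: "j \<in> Hom C A AE" "y1 \<cdot> j = ident C A" "y2 \<cdot> j = a"
    using prod_ind[OF pA, of "ident C A" A a] a ident_Hom[OF Ao] by blast
  have mj: "m \<cdot> j = st \<cdot> (r \<cdot> a)"
  proof (rule prod_uniq[OF pE])
    show "m \<cdot> j \<in> Hom C A EE" using m j Hom_comp by blast
    show "st \<cdot> (r \<cdot> a) \<in> Hom C A EE" using st r a Hom_comp by blast
    show "x1 \<cdot> (m \<cdot> j) = x1 \<cdot> (st \<cdot> (r \<cdot> a))"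
      using a m j st r x y Ao Eo by (simp add: cs ext[OF m(2)] ext2[OF rs(1)])
    show "x2 \<cdot> (m \<cdot> j) = x2 \<cdot> (st \<cdot> (r \<cdot> a))"
      using a m j st r x y Ao Eo by (simp add: cs ext[OF m(3)] ext2[OF rs(2)])
  qed
  obtain i where i: "i \<in> Hom C A Z" "z1 \<cdot> i = j" "z2 \<cdot> i = r \<cdot> a"
    using pb_ind[OF pZ, of j A "r \<cdot> a"] j m st r a HomD Hom_comp mj by metis
  have rhoi: "\<rho> \<cdot> i = a" unfolding \<rho>_def using i j z y by (simp add: cs ext[OF i(2)])
  define s where "s = x1 \<cdot> st"
  define t where "t = x2 \<cdot> st"
  have s: "s \<in> Hom C PE E" "s \<in> fib" "t \<in> Hom C PE E" unfolding s_def t_def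
    using x st Hom_comp fib_comp HomD by auto
  have sr: "s \<cdot> r = ident C E" unfolding s_def using rs x st r by (simp add: cs)
  have sw: "s \<in> weq" using weq_cancel_r[OF r(1) s(1)] sr ident_weq[OF Eo] r(2) by simp
  define \<sigma> where "\<sigma> = y1 \<cdot> z1"
  have sig: "\<sigma> \<in> Hom C Z A" unfolding \<sigma>_def using y z Hom_comp by blast
  have pbs: "pullback C a s Z \<sigma> z2"
    unfolding pullback_def
  proof (intro conjI allI impI)
    show "a \<in> Ar C" "s \<in> Ar C" "Cod C a = Cod C s" using a s HomD by auto
    show "\<sigma> \<in> Hom C Z (Dom C a)" "z2 \<in> Hom C Z (Dom C s)" using sig z s a HomD by auto
    have "x1 \<cdot> (m \<cdot> z1) = a \<cdot> (y1 \<cdot> z1)" using a y(1,2) z(1,2) m(1) st(1) x(1,2) by (simp add: cs ext[OF m(2)])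
    moreover have "x1 \<cdot> (m \<cdot> z1) = x1 \<cdot> (st \<cdot> z2)" using z by simp
    ultimately show "a \<cdot> \<sigma> = s \<cdot> z2" unfolding \<sigma>_def s_def using a y z m st x
      by (simp add: cs)
    fix Q \<alpha> \<beta> assume ab: "\<alpha> \<in> Hom C Q (Dom C a) \<and> \<beta> \<in> Hom C Q (Dom C s) \<and> a \<cdot> \<alpha> = s \<cdot> \<beta>"
    then have al: "\<alpha> \<in> Hom C Q A" and be: "\<beta> \<in> Hom C Q PE" and eq: "a \<cdot> \<alpha> = x1 \<cdot> (st \<cdot> \<beta>)"
      using a s st x unfolding s_def by (auto simp: cs)
    obtain \<gamma> where g: "\<gamma> \<in> Hom C Q AE" "y1 \<cdot> \<gamma> = \<alpha>" "y2 \<cdot> \<gamma> = x2 \<cdot> (st \<cdot> \<beta>)"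
      using prod_ind[OF pA, of \<alpha> Q "x2 \<cdot> (st \<cdot> \<beta>)"] al be st x Hom_comp by blast
    have mg: "m \<cdot> \<gamma> = st \<cdot> \<beta>"
    proof (rule prod_uniq[OF pE])
      show "m \<cdot> \<gamma> \<in> Hom C Q EE" "st \<cdot> \<beta> \<in> Hom C Q EE" using m g st be Hom_comp by auto
      show "x1 \<cdot> (m \<cdot> \<gamma>) = x1 \<cdot> (st \<cdot> \<beta>)" using m g a y x eq by (simp add: cs ext[OF m(2)])
      show "x2 \<cdot> (m \<cdot> \<gamma>) = x2 \<cdot> (st \<cdot> \<beta>)" using m g a y x by (simp add: cs ext[OF m(3)])
    qed
    obtain u where u: "u \<in> Hom C Q Z" "z1 \<cdot> u = \<gamma>" "z2 \<cdot> u = \<beta>"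
      using pb_ind[OF pZ, of \<gamma> Q \<beta>] g be m st mg HomD by metis
    show "\<exists>!u. u \<in> Hom C Q Z \<and> \<sigma> \<cdot> u = \<alpha> \<and> z2 \<cdot> u = \<beta>"
    proof (rule ex1I[of _ u])
      show "u \<in> Hom C Q Z \<and> \<sigma> \<cdot> u = \<alpha> \<and> z2 \<cdot> u = \<beta>" unfolding \<sigma>_def using u g y z
        by (simp add: cs)
      fix u' assume u'0: "u' \<in> Hom C Q Z \<and> \<sigma> \<cdot> u' = \<alpha> \<and> z2 \<cdot> u' = \<beta>"
      then have u': "u' \<in> Hom C Q Z" "\<sigma> \<cdot> u' = \<alpha>" "z2 \<cdot> u' = \<beta>" by auto
      have "z1 \<cdot> u' = \<gamma>"
      proof (rule prod_uniq[OF pA])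
        show "z1 \<cdot> u' \<in> Hom C Q AE" "\<gamma> \<in> Hom C Q AE" using z u' g Hom_comp by auto
        show "y1 \<cdot> (z1 \<cdot> u') = y1 \<cdot> \<gamma>" using y(1,2) z(1,2) u' g unfolding \<sigma>_def by (simp add: cs)
        have "y2 \<cdot> (z1 \<cdot> u') = x2 \<cdot> (m \<cdot> (z1 \<cdot> u'))" using y(1,2) z(1,2) m(1) x(1,2) u' by (simp add: cs ext[OF m(3)])
        also have "\<dots> = x2 \<cdot> (st \<cdot> (z2 \<cdot> u'))" using y(1,2) z(1,2) m(1) x(1,2) st(1) u' by (simp add: cs ext[OF z(3)])
        finally show "y2 \<cdot> (z1 \<cdot> u') = y2 \<cdot> \<gamma>" using u' g by simp
      qed
      then show "u' = u" using pb_uniq[OF pZ, of u' Q u] u u' by simp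
    qed
  qed
  have sigw: "\<sigma> \<in> weq" using pb_triv[OF s(2) sw pbs] by blast
  have sigi: "\<sigma> \<cdot> i = ident C A" unfolding \<sigma>_def using y z i j by (simp add: cs)
  have "i \<in> weq" using weq_cancel_l[OF i(1) sig] sigi ident_weq[OF Ao] sigw by simp
  then show ?thesis using i rho rhoi by blast
qed

lemma sec_lemma: assumes q: "q \<in> Hom C E B" "q \<in> fib" and a: "a \<in> Hom C A E" and qa: "q \<cdot> a \<in> weq"
  shows "\<exists>\<sigma> \<in> Hom C B E. q \<cdot> \<sigma> = ident C B"
proof -
  obtain Z i \<rho> where i: "i \<in> Hom C A Z" "i \<in> weq" and r: "\<rho> \<in> Hom C Z E" "\<rho> \<in> fib" "\<rho> \<cdot> i = a"
    using fact[OF a] by blast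
  have qr: "q \<cdot> \<rho> \<in> Hom C Z B" "q \<cdot> \<rho> \<in> fib" using q r Hom_comp fib_comp HomD by auto
  have "(q \<cdot> \<rho>) \<cdot> i = q \<cdot> a" using assoc[OF i(1) r(1) q(1)] r(3) by simp
  then have "q \<cdot> \<rho> \<in> weq" using weq_cancel_r[OF i(1) qr(1)] qa i(2) by simp
  then obtain \<tau> where t: "\<tau> \<in> Hom C B Z" "(q \<cdot> \<rho>) \<cdot> \<tau> = ident C B"
    using triv_sec[OF qr(2)] qr(1) HomD by metis
  have "q \<cdot> (\<rho> \<cdot> \<tau>) = ident C B" using assoc[OF t(1) r(1) q(1)] t(2) by simp
  moreover have "\<rho> \<cdot> \<tau> \<in> Hom C B E" using t r Hom_comp by blast
  ultimately show ?thesis by blast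
qed

lemma lift: assumes w: "w \<in> Hom C A B" "w \<in> weq" and p: "p \<in> Hom C E D" "p \<in> fib"
  and u: "u \<in> Hom C A E" and v: "v \<in> Hom C B D" and sq: "p \<cdot> u = v \<cdot> w"
  shows "\<exists>l \<in> Hom C B E. p \<cdot> l = v"
proof -
  obtain E' q pe where pb: "pullback C v p E' q pe" using pb_ex[of p v] p v HomD by metis
  have h: "q \<in> Hom C E' B" "pe \<in> Hom C E' E" "v \<cdot> q = p \<cdot> pe" "q \<in> fib"
    using pbD[OF pb] pb_fib[OF p(2) pb] v p HomD by auto
  obtain a where a: "a \<in> Hom C A E'" "q \<cdot> a = w" "pe \<cdot> a = u"
    using pb_ind[OF pb, of w A u] w u v p HomD sq by metis
  obtain \<sigma> where s: "\<sigma> \<in> Hom C B E'" "q \<cdot> \<sigma> = ident C B" using sec_lemma[OF h(1) h(4) a(1)] a(2) w(2) by auto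
  have "p \<cdot> (pe \<cdot> \<sigma>) = v" using v p h(1,2) s(1) by (simp add: cs ext[OF h(3)[symmetric]] s(2))
  moreover have "pe \<cdot> \<sigma> \<in> Hom C B E" using s h Hom_comp by blast
  ultimately show ?thesis by blast
qed

lemma pb_sym: assumes pb: "pullback C f g P p1 p2" shows "pullback C g f P p2 p1"
  using pb unfolding pullback_def
proof (elim conjE, intro conjI allI impI)
  fix Q a b assume U: "\<forall>Q a b. a \<in> Hom C Q (Dom C f) \<and> b \<in> Hom C Q (Dom C g) \<and> f \<cdot> a = g \<cdot> b \<longrightarrow>
          (\<exists>!u. u \<in> Hom C Q P \<and> p1 \<cdot> u = a \<and> p2 \<cdot> u = b)"
    and ab: "a \<in> Hom C Q (Dom C g) \<and> b \<in> Hom C Q (Dom C f) \<and> g \<cdot> a = f \<cdot> b"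
  then have "\<exists>!u. u \<in> Hom C Q P \<and> p1 \<cdot> u = b \<and> p2 \<cdot> u = a" by simp
  then show "\<exists>!u. u \<in> Hom C Q P \<and> p2 \<cdot> u = a \<and> p1 \<cdot> u = b" by (simp add: conj_commute)
qed (auto)

lemma fpoD: assumes F: "fpath_obj C fib weq p PY r st YY q1 q2"
  shows "p \<in> Hom C (Dom C p) (Cod C p)" "p \<in> fib" "q1 \<in> Hom C YY (Dom C p)" "q2 \<in> Hom C YY (Dom C p)"
    "p \<cdot> q1 = p \<cdot> q2" "q1 \<in> fib" "q2 \<in> fib" "r \<in> Hom C (Dom C p) PY" "r \<in> weq"
    "st \<in> Hom C PY YY" "st \<in> fib" "q1 \<cdot> (st \<cdot> r) = ident C (Dom C p)" "q2 \<cdot> (st \<cdot> r) = ident C (Dom C p)"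
    "pullback C p p YY q1 q2" "Dom C p \<in> Ob C"
proof -
  have pb: "pullback C p p YY q1 q2" and pf: "p \<in> fib" using F unfolding fpath_obj_def by auto
  show "pullback C p p YY q1 q2" "p \<in> fib" by fact+
  show "p \<in> Hom C (Dom C p) (Cod C p)" "q1 \<in> Hom C YY (Dom C p)" "q2 \<in> Hom C YY (Dom C p)"
    "p \<cdot> q1 = p \<cdot> q2" using pbD[OF pb] by auto
  show "q1 \<in> fib" using pb_fib[OF pf pb] .
  show "q2 \<in> fib" using pb_fib[OF pf pb_sym[OF pb]] .
  show "r \<in> Hom C (Dom C p) PY" "r \<in> weq"
    "st \<in> Hom C PY YY" "st \<in> fib" "q1 \<cdot> (st \<cdot> r) = ident C (Dom C p)" "q2 \<cdot> (st \<cdot> r) = ident C (Dom C p)"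
    using F unfolding fpath_obj_def by auto
  then show "Dom C p \<in> Ob C" using Dom_Ob by blast
qed

lemma trans_fixed: assumes F: "fpath_obj C fib weq p PY r st YY q1 q2"
  and G1: "G1 \<in> Hom C D PY" and G2: "G2 \<in> Hom C D PY" and m: "q2 \<cdot> (st \<cdot> G1) = q1 \<cdot> (st \<cdot> G2)"
  shows "\<exists>G \<in> Hom C D PY. q1 \<cdot> (st \<cdot> G) = q1 \<cdot> (st \<cdot> G1) \<and> q2 \<cdot> (st \<cdot> G) = q2 \<cdot> (st \<cdot> G2)"
proof -
  note f = fpoD[OF F]
  define Y where "Y = Dom C p"
  define s where "s = q1 \<cdot> st"
  define t where "t = q2 \<cdot> st"
  have Yo: "Y \<in> Ob C" using f Y_def by simp
  have H: "p \<in> Hom C Y (Cod C p)" "q1 \<in> Hom C YY Y" "q2 \<in> Hom C YY Y" "r \<in> Hom C Y PY" "st \<in> Hom C PY YY"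
    using f unfolding Y_def by auto
  have st: "s \<in> Hom C PY Y" "t \<in> Hom C PY Y" unfolding s_def t_def
    using H Hom_comp by blast+
  have "s \<in> fib" unfolding s_def using fib_comp[OF f(11) f(6)] H HomD by simp
  note st = st this
  have sr: "s \<cdot> r = ident C Y" "t \<cdot> r = ident C Y" unfolding s_def t_def Y_def using H f(12,13)
    unfolding Y_def by (simp_all add: cs)
  have sw: "s \<in> weq" using weq_cancel_r[OF H(4) st(1)] sr ident_weq[OF Yo] f(9) by simp
  obtain E e1 e2 where pE: "pullback C t s E e1 e2" using pb_ex[of s t] st HomD by metis
  have e: "e1 \<in> Hom C E PY" "e2 \<in> Hom C E PY" "t \<cdot> e1 = s \<cdot> e2" "e1 \<in> weq"
    using pbD[OF pE] st HomD pb_triv[OF st(3) sw pE] by auto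
  obtain w where w: "w \<in> Hom C Y E" "e1 \<cdot> w = r" "e2 \<cdot> w = r"
    using pb_ind[OF pE, of r Y r] H st sr HomD by metis
  have ww: "w \<in> weq" using weq_cancel_l[OF w(1) e(1)] w(2) f(9) e(4) by simp
  have pst: "p \<cdot> s = p \<cdot> t" unfolding s_def t_def using H by (simp add: cs ext[OF f(5)])
  have "p \<cdot> (s \<cdot> e1) = p \<cdot> (t \<cdot> e2)"
  proof -
    have "p \<cdot> (s \<cdot> e1) = p \<cdot> (t \<cdot> e1)" using H st e(1,2) by (simp add: cs ext[OF pst])
    also have "\<dots> = p \<cdot> (s \<cdot> e2)" using e(3) by simp
    also have "\<dots> = p \<cdot> (t \<cdot> e2)" using H st e(1,2) by (simp add: cs ext[OF pst])
    finally show ?thesis .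
  qed
  then obtain v where v: "v \<in> Hom C E YY" "q1 \<cdot> v = s \<cdot> e1" "q2 \<cdot> v = t \<cdot> e2"
    using pb_ind[OF f(14), of "s \<cdot> e1" E "t \<cdot> e2"] H st e Hom_comp HomD unfolding Y_def by metis
  have sq: "st \<cdot> r = v \<cdot> w"
  proof (rule pb_uniq[OF f(14)])
    show "st \<cdot> r \<in> Hom C Y YY" "v \<cdot> w \<in> Hom C Y YY" using H v w Hom_comp by auto
    show "q1 \<cdot> (st \<cdot> r) = q1 \<cdot> (v \<cdot> w)" using H v(1) w(1) st e(1,2) Yo
      by (simp add: cs ext[OF v(2)] f(12)[folded Y_def] w(2) sr)
    show "q2 \<cdot> (st \<cdot> r) = q2 \<cdot> (v \<cdot> w)" using H v(1) w(1) st e(1,2) Yo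
      by (simp add: cs ext[OF v(3)] f(13)[folded Y_def] w(3) sr)
  qed
  obtain L where L: "L \<in> Hom C E PY" "st \<cdot> L = v" using lift[OF w(1) ww H(5) f(11) H(4) v(1) sq] by blast
  have "t \<cdot> G1 = s \<cdot> G2" unfolding s_def t_def using H G1 G2 m by (simp add: cs)
  then obtain g where g: "g \<in> Hom C D E" "e1 \<cdot> g = G1" "e2 \<cdot> g = G2"
    using pb_ind[OF pE, of G1 D G2] G1 G2 st HomD by metis
  have "q1 \<cdot> (st \<cdot> (L \<cdot> g)) = q1 \<cdot> (st \<cdot> G1)" using H L(1) g(1) e(1,2) v(1) st
    by (simp add: cs ext[OF L(2)] ext[OF v(2)] g(2) s_def)
  moreover have "q2 \<cdot> (st \<cdot> (L \<cdot> g)) = q2 \<cdot> (st \<cdot> G2)" using H L(1) g(1) e(1,2) v(1) st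
    by (simp add: cs ext[OF L(2)] ext[OF v(3)] g(3) t_def)
  moreover have "L \<cdot> g \<in> Hom C D PY" using L g Hom_comp by blast
  ultimately show ?thesis by blast
qed

lemma transport:
  assumes pbQ: "pullback C \<pi> f Q a1 b1"
  and FP: "fpath_obj C fib weq \<pi> P r st YY y1 y2"
  and FX: "fpath_obj C fib weq d PX rX stX XX x1 x2"
  and eps: "\<epsilon> \<in> Hom C Q (Dom C d)" and de: "d \<cdot> \<epsilon> = b1"
  and K: "K \<in> Hom C R P" and v1: "v1 \<in> Hom C R Q" and u1: "u1 \<in> Hom C R Q"
  and e1: "a1 \<cdot> v1 = y1 \<cdot> (st \<cdot> K)" and e2: "a1 \<cdot> u1 = y2 \<cdot> (st \<cdot> K)" and e3: "b1 \<cdot> u1 = b1 \<cdot> v1"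
  shows "\<exists>G \<in> Hom C R PX. x1 \<cdot> (stX \<cdot> G) = \<epsilon> \<cdot> v1 \<and> x2 \<cdot> (stX \<cdot> G) = \<epsilon> \<cdot> u1"
proof -
  note fp = fpoD[OF FP] and fx = fpoD[OF FX]
  define Pi where "Pi = Dom C \<pi>"
  define J where "J = Cod C \<pi>"
  define I where "I = Dom C f"
  define X where "X = Dom C d"
  have pq: "\<pi> \<in> Hom C Pi J" "f \<in> Hom C I J" "a1 \<in> Hom C Q Pi" "b1 \<in> Hom C Q I" "\<pi> \<cdot> a1 = f \<cdot> b1"
    using pbD[OF pbQ] unfolding Pi_def J_def I_def by auto
  have dI: "d \<in> Hom C X I"
  proof -
    have "Cod C (d \<cdot> \<epsilon>) = Cod C d" using eps fx(1) Hom_comp HomD by (metis)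
    then have "Cod C d = I" using de pq(4) HomD by simp
    then show ?thesis using fx(1) X_def by simp
  qed
  have hp: "y1 \<in> Hom C YY Pi" "y2 \<in> Hom C YY Pi" "r \<in> Hom C Pi P" "st \<in> Hom C P YY"
    using fp unfolding Pi_def by auto
  have hx: "x1 \<in> Hom C XX X" "x2 \<in> Hom C XX X" "rX \<in> Hom C X PX" "stX \<in> Hom C PX XX"
    using fx unfolding X_def by auto
  have Pio: "Pi \<in> Ob C" and Xo: "X \<in> Ob C" and Qo: "Q \<in> Ob C"
    using fp(15) fx(15) pq(3) Dom_Ob unfolding Pi_def X_def by auto
  have ep: "\<epsilon> \<in> Hom C Q X" using eps X_def by simp
  define s where "s = y1 \<cdot> st"
  define t where "t = y2 \<cdot> st"
  have st: "s \<in> Hom C P Pi" "t \<in> Hom C P Pi" unfolding s_def t_def using hp Hom_comp by blast+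
  have sf: "s \<in> fib" unfolding s_def using fib_comp[OF fp(11) fp(6)] hp HomD by simp
  have sr: "s \<cdot> r = ident C Pi" "t \<cdot> r = ident C Pi" unfolding s_def t_def using hp fp(12,13)
    unfolding Pi_def by (simp_all add: cs)
  have sw: "s \<in> weq" using weq_cancel_r[OF hp(3) st(1)] sr ident_weq[OF Pio] fp(9) by simp
  have pst: "\<pi> \<cdot> t = \<pi> \<cdot> s" unfolding s_def t_def using hp pq(1) by (simp add: cs ext[OF fp(5)])
  obtain W w1 w2 where pW: "pullback C a1 s W w1 w2" using pb_ex[of s a1] st sf pq HomD by metis
  have w: "w1 \<in> Hom C W Q" "w2 \<in> Hom C W P" "a1 \<cdot> w1 = s \<cdot> w2" "w1 \<in> weq"
    using pbD[OF pW] st pq HomD pb_triv[OF sf sw pW] by auto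
  have "\<pi> \<cdot> (t \<cdot> w2) = f \<cdot> (b1 \<cdot> w1)"
  proof -
    have "\<pi> \<cdot> (t \<cdot> w2) = \<pi> \<cdot> (s \<cdot> w2)" using pq(1) st w(1,2) by (simp add: cs ext[OF pst])
    also have "\<dots> = \<pi> \<cdot> (a1 \<cdot> w1)" using w(3) by simp
    also have "\<dots> = f \<cdot> (b1 \<cdot> w1)" using pq(1-4) w(1,2) by (simp add: cs ext[OF pq(5)])
    finally show ?thesis .
  qed
  then obtain z where z: "z \<in> Hom C W Q" "a1 \<cdot> z = t \<cdot> w2" "b1 \<cdot> z = b1 \<cdot> w1"
    using pb_ind[OF pbQ, of "t \<cdot> w2" W "b1 \<cdot> w1"] pq st w Hom_comp HomD unfolding Pi_def I_def by metis
  have "a1 \<cdot> ident C Q = s \<cdot> (r \<cdot> a1)" using pq(3) st(1) hp(3) Qo Pio by (simp add: cs ext[OF sr(1)])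
  then obtain r' where r': "r' \<in> Hom C Q W" "w1 \<cdot> r' = ident C Q" "w2 \<cdot> r' = r \<cdot> a1"
    using pb_ind[OF pW, of "ident C Q" Q "r \<cdot> a1"] pq st hp Qo ident_Hom Hom_comp HomD by metis
  have rw: "r' \<in> weq" using weq_cancel_l[OF r'(1) w(1)] r'(2) ident_weq[OF Qo] w(4) by simp
  have "d \<cdot> (\<epsilon> \<cdot> w1) = d \<cdot> (\<epsilon> \<cdot> z)" using dI ep w(1) z(1) pq(4)
    by (simp add: cs ext[OF de] z(3))
  then obtain v where v: "v \<in> Hom C W XX" "x1 \<cdot> v = \<epsilon> \<cdot> w1" "x2 \<cdot> v = \<epsilon> \<cdot> z"
    using pb_ind[OF fx(14), of "\<epsilon> \<cdot> w1" W "\<epsilon> \<cdot> z"] ep w z Hom_comp HomD unfolding X_def by metis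
  have zr: "z \<cdot> r' = ident C Q"
  proof (rule pb_uniq[OF pbQ])
    show "z \<cdot> r' \<in> Hom C Q Q" "ident C Q \<in> Hom C Q Q" using z r' Hom_comp ident_Hom[OF Qo] by auto
    show "a1 \<cdot> (z \<cdot> r') = a1 \<cdot> ident C Q" using pq(3) z(1) r'(1) st w(1,2) hp(3) Qo Pio
      by (simp add: cs ext[OF z(2)] r'(3) ext[OF sr(2)])
    show "b1 \<cdot> (z \<cdot> r') = b1 \<cdot> ident C Q" using pq(4) z(1) r'(1) st w(1,2) hp(3) Qo Pio
      by (simp add: cs ext[OF z(3)] r'(2))
  qed
  have sq: "stX \<cdot> (rX \<cdot> \<epsilon>) = v \<cdot> r'"
  proof (rule pb_uniq[OF fx(14)])
    show "stX \<cdot> (rX \<cdot> \<epsilon>) \<in> Hom C Q XX" "v \<cdot> r' \<in> Hom C Q XX" using hx ep v r' Hom_comp by blast+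
    show "x1 \<cdot> (stX \<cdot> (rX \<cdot> \<epsilon>)) = x1 \<cdot> (v \<cdot> r')" using hx ep v(1) r'(1) w(1) Xo Qo
      by (simp add: cs ext2[OF fx(12)[folded X_def]] ext[OF v(2)] r'(2))
    show "x2 \<cdot> (stX \<cdot> (rX \<cdot> \<epsilon>)) = x2 \<cdot> (v \<cdot> r')" using hx ep v(1) r'(1) z(1) Xo Qo
      by (simp add: cs ext2[OF fx(13)[folded X_def]] ext[OF v(3)] zr)
  qed
  obtain L where L: "L \<in> Hom C W PX" "stX \<cdot> L = v"
    using lift[OF r'(1) rw hx(4) fx(11) _ v(1) sq] hx ep Hom_comp by blast
  have "a1 \<cdot> v1 = s \<cdot> K" unfolding s_def using e1 hp K by (simp add: cs)
  then obtain y where y: "y \<in> Hom C R W" "w1 \<cdot> y = v1" "w2 \<cdot> y = K"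
    using pb_ind[OF pW, of v1 R K] v1 K pq st HomD by metis
  have zy: "z \<cdot> y = u1"
  proof (rule pb_uniq[OF pbQ])
    show "z \<cdot> y \<in> Hom C R Q" "u1 \<in> Hom C R Q" using z y u1 Hom_comp by auto
    show "a1 \<cdot> (z \<cdot> y) = a1 \<cdot> u1" using pq(3) z(1) y(1) st w(1,2) hp
      by (simp add: cs ext[OF z(2)] y(3) e2 t_def)
    show "b1 \<cdot> (z \<cdot> y) = b1 \<cdot> u1" using pq(4) z(1) y(1) w(1,2)
      by (simp add: cs ext[OF z(3)] y(2) e3)
  qed
  have "x1 \<cdot> (stX \<cdot> (L \<cdot> y)) = \<epsilon> \<cdot> v1" using hx L(1) y(1) v(1) ep w(1)
    by (simp add: cs ext[OF L(2)] ext[OF v(2)] y(2))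
  moreover have "x2 \<cdot> (stX \<cdot> (L \<cdot> y)) = \<epsilon> \<cdot> u1" using hx L(1) y(1) v(1) ep z(1)
    by (simp add: cs ext[OF L(2)] ext[OF v(3)] zy)
  moreover have "L \<cdot> y \<in> Hom C R PX" using L y Hom_comp by blast
  ultimately show ?thesis by blast
qed

lemma paste1: assumes p2: "pullback C \<pi> g Q2 a2 b2" and p1: "pullback C b2 f Q c1 c2"
  shows "pullback C \<pi> (g \<cdot> f) Q (a2 \<cdot> c1) c2"
proof -
  have h2: "\<pi> \<in> Hom C (Dom C \<pi>) (Cod C \<pi>)" "g \<in> Hom C (Dom C g) (Cod C \<pi>)" "a2 \<in> Hom C Q2 (Dom C \<pi>)"
    "b2 \<in> Hom C Q2 (Dom C g)" "\<pi> \<cdot> a2 = g \<cdot> b2" using pbD[OF p2] by auto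
  have h1: "b2 \<in> Hom C (Dom C b2) (Cod C b2)" "f \<in> Hom C (Dom C f) (Cod C b2)" "c1 \<in> Hom C Q (Dom C b2)"
    "c2 \<in> Hom C Q (Dom C f)" "b2 \<cdot> c1 = f \<cdot> c2" using pbD[OF p1] by auto
  have cb: "Cod C b2 = Dom C g" "Dom C b2 = Q2" using HomD[OF h2(4)] by simp_all
  have f: "f \<in> Hom C (Dom C f) (Dom C g)" "c1 \<in> Hom C Q Q2" using h1(2,3) cb by simp_all
  have gf: "g \<cdot> f \<in> Hom C (Dom C f) (Cod C \<pi>)" using Hom_comp[OF f(1) h2(2)] .
  show ?thesis unfolding pullback_def
  proof (intro conjI allI impI)
    show "\<pi> \<in> Ar C" "g \<cdot> f \<in> Ar C" "Cod C \<pi> = Cod C (g \<cdot> f)" using h2 gf by (auto simp: Hom_def)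
    show "a2 \<cdot> c1 \<in> Hom C Q (Dom C \<pi>)" using Hom_comp[OF f(2) h2(3)] .
    show "c2 \<in> Hom C Q (Dom C (g \<cdot> f))" using h1 gf by (auto simp: Hom_def)
    show "\<pi> \<cdot> (a2 \<cdot> c1) = (g \<cdot> f) \<cdot> c2" using h2(1-4) f h1(4)
      by (simp add: cs ext[OF h2(5)] h1(5))
    fix Q' \<alpha> \<beta> assume ab: "\<alpha> \<in> Hom C Q' (Dom C \<pi>) \<and> \<beta> \<in> Hom C Q' (Dom C (g \<cdot> f)) \<and> \<pi> \<cdot> \<alpha> = (g \<cdot> f) \<cdot> \<beta>"
    have al: "\<alpha> \<in> Hom C Q' (Dom C \<pi>)" using ab by simp
    have dgf: "Dom C (g \<cdot> f) = Dom C f" using HomD[OF gf] by simp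
    have be: "\<beta> \<in> Hom C Q' (Dom C f)" using ab dgf by simp
    have eq: "\<pi> \<cdot> \<alpha> = g \<cdot> (f \<cdot> \<beta>)" using ab assoc[OF be f(1) h2(2)] by simp
    obtain \<gamma> where g: "\<gamma> \<in> Hom C Q' Q2" "a2 \<cdot> \<gamma> = \<alpha>" "b2 \<cdot> \<gamma> = f \<cdot> \<beta>"
      using pb_ind[OF p2, of \<alpha> Q' "f \<cdot> \<beta>"] al be f eq Hom_comp h2 by blast
    obtain \<delta> where d: "\<delta> \<in> Hom C Q' Q" "c1 \<cdot> \<delta> = \<gamma>" "c2 \<cdot> \<delta> = \<beta>"
      using pb_ind[OF p1, of \<gamma> Q' \<beta>] g be cb by auto
    show "\<exists>!u. u \<in> Hom C Q' Q \<and> (a2 \<cdot> c1) \<cdot> u = \<alpha> \<and> c2 \<cdot> u = \<beta>"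
    proof (rule ex1I[of _ \<delta>])
      show "\<delta> \<in> Hom C Q' Q \<and> (a2 \<cdot> c1) \<cdot> \<delta> = \<alpha> \<and> c2 \<cdot> \<delta> = \<beta>" using d g h2(3) f(2)
        by (simp add: cs)
      fix u assume u0: "u \<in> Hom C Q' Q \<and> (a2 \<cdot> c1) \<cdot> u = \<alpha> \<and> c2 \<cdot> u = \<beta>"
      then have u: "u \<in> Hom C Q' Q" "(a2 \<cdot> c1) \<cdot> u = \<alpha>" "c2 \<cdot> u = \<beta>" by auto
      have "c1 \<cdot> u = \<gamma>"
      proof (rule pb_uniq[OF p2])
        show "c1 \<cdot> u \<in> Hom C Q' Q2" "\<gamma> \<in> Hom C Q' Q2" using u f g Hom_comp by auto
        show "a2 \<cdot> (c1 \<cdot> u) = a2 \<cdot> \<gamma>" using u(1) f h2(3) u(2) g(2) by (simp add: cs)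
        show "b2 \<cdot> (c1 \<cdot> u) = b2 \<cdot> \<gamma>" using u(1) f h2(4) h1(4) by (simp add: cs ext[OF h1(5)] u(3) g(3))
      qed
      then show "u = \<delta>" using pb_uniq[OF p1 u(1) d(1)] d u by simp
    qed
  qed
qed

lemma paste2: assumes pR': "pullback C h g R' r1 r2" and pR: "pullback C h (g \<cdot> f) R e1 e2"
  and f: "f \<in> Hom C I J1" and g: "g \<in> Hom C J1 J"
  and e: "e \<in> Hom C R R'" "r1 \<cdot> e = e1" "r2 \<cdot> e = f \<cdot> e2"
  shows "pullback C r2 f R e e2"
proof -
  have gf: "g \<cdot> f \<in> Hom C I J" using Hom_comp[OF f g] .
  have h': "h \<in> Hom C (Dom C h) J" "r1 \<in> Hom C R' (Dom C h)" "r2 \<in> Hom C R' J1" "h \<cdot> r1 = g \<cdot> r2"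
    using pbD[OF pR'] g by (auto simp: Hom_def)
  have h: "e1 \<in> Hom C R (Dom C h)" "e2 \<in> Hom C R I" "h \<cdot> e1 = (g \<cdot> f) \<cdot> e2"
    using pbD[OF pR] gf by (auto simp: Hom_def)
  show ?thesis unfolding pullback_def
  proof (intro conjI allI impI)
    show "r2 \<in> Ar C" "f \<in> Ar C" "Cod C r2 = Cod C f" using h' f by (auto simp: Hom_def)
    show "e \<in> Hom C R (Dom C r2)" "e2 \<in> Hom C R (Dom C f)" using e h h' f by (auto simp: Hom_def)
    show "r2 \<cdot> e = f \<cdot> e2" by fact
    fix Q \<alpha> \<beta> assume ab: "\<alpha> \<in> Hom C Q (Dom C r2) \<and> \<beta> \<in> Hom C Q (Dom C f) \<and> r2 \<cdot> \<alpha> = f \<cdot> \<beta>"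
    then have al: "\<alpha> \<in> Hom C Q R'" and be: "\<beta> \<in> Hom C Q I" and eq: "r2 \<cdot> \<alpha> = f \<cdot> \<beta>"
      using h' f by (auto simp: Hom_def)
    have "h \<cdot> (r1 \<cdot> \<alpha>) = (g \<cdot> f) \<cdot> \<beta>" using h'(1-3) al be f g
      by (simp add: cs ext[OF h'(4)] eq)
    then obtain \<delta> where d: "\<delta> \<in> Hom C Q R" "e1 \<cdot> \<delta> = r1 \<cdot> \<alpha>" "e2 \<cdot> \<delta> = \<beta>"
      using pb_ind[OF pR, of "r1 \<cdot> \<alpha>" Q \<beta>] al be h' gf Hom_comp HomD by metis
    have ed: "e \<cdot> \<delta> = \<alpha>"
    proof (rule pb_uniq[OF pR'])
      show "e \<cdot> \<delta> \<in> Hom C Q R'" "\<alpha> \<in> Hom C Q R'" using e d al Hom_comp by auto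
      show "r1 \<cdot> (e \<cdot> \<delta>) = r1 \<cdot> \<alpha>" using e(1) d(1) h'(2) h(1) by (simp add: cs ext[OF e(2)] d(2))
      show "r2 \<cdot> (e \<cdot> \<delta>) = r2 \<cdot> \<alpha>" using e(1) d(1) h'(3) f h(2) al be by (simp add: cs ext[OF e(3)] d(3) eq)
    qed
    show "\<exists>!u. u \<in> Hom C Q R \<and> e \<cdot> u = \<alpha> \<and> e2 \<cdot> u = \<beta>"
    proof (rule ex1I[of _ \<delta>])
      show "\<delta> \<in> Hom C Q R \<and> e \<cdot> \<delta> = \<alpha> \<and> e2 \<cdot> \<delta> = \<beta>" using d ed by simp
      fix u assume u0: "u \<in> Hom C Q R \<and> e \<cdot> u = \<alpha> \<and> e2 \<cdot> u = \<beta>"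
      then have u: "u \<in> Hom C Q R" "e \<cdot> u = \<alpha>" "e2 \<cdot> u = \<beta>" by auto
      have "e1 \<cdot> u = r1 \<cdot> \<alpha>" using u(1) e(1) h'(2) by (simp add: cs flip: e(2) u(2))
      then show "u = \<delta>" using pb_uniq[OF pR u(1) d(1)] d u by simp
    qed
  qed
qed

lemma is_piD: assumes "is_pi C fib weq strong g f Pi \<pi> Q q1 q2 \<epsilon>"
  shows "g \<in> fib" "f \<in> fib" "Cod C g = Dom C f" "\<pi> \<in> fib" "\<pi> \<in> Hom C Pi (Cod C f)"
     "pullback C \<pi> f Q q1 q2" "\<epsilon> \<in> Hom C Q (Dom C g)" "g \<cdot> \<epsilon> = q2"
  using assms unfolding is_pi_def by auto

lemma is_pi_weak: assumes "is_pi C fib weq strong g f Pi \<pi> Q q1 q2 \<epsilon>"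
  and "h \<in> Hom C D (Cod C f)" "pullback C h f R d1 d2" "m \<in> Hom C R (Dom C g)" "g \<cdot> m = d2"
  shows "\<exists>k \<in> Hom C D Pi. \<pi> \<cdot> k = h \<and>
           (\<forall>u. u \<in> Hom C R Q \<and> q1 \<cdot> u = k \<cdot> d1 \<and> q2 \<cdot> u = d2 \<longrightarrow> fhtpy C fib weq g (\<epsilon> \<cdot> u) m)"
proof -
  have "\<forall>D h R d1 d2 m.
        h \<in> Hom C D (Cod C f) \<and> pullback C h f R d1 d2 \<and>
        m \<in> Hom C R (Dom C g) \<and> cmp C g m = d2 \<longrightarrow>
        (\<exists>k \<in> Hom C D Pi. cmp C \<pi> k = h \<and>
           (\<forall>u. u \<in> Hom C R Q \<and> cmp C q1 u = cmp C k d1 \<and> cmp C q2 u = d2 \<longrightarrow>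
                fhtpy C fib weq g (cmp C \<epsilon> u) m))"
    using assms(1) unfolding is_pi_def by (elim conjE)
  then show ?thesis using assms(2-5) by blast
qed

lemma is_pi_strong: assumes "is_pi C fib weq strong g f Pi \<pi> Q q1 q2 \<epsilon>" and "strong"
  and "h \<in> Hom C D (Cod C f)" "pullback C h f R d1 d2"
  "k \<in> Hom C D Pi" "k' \<in> Hom C D Pi" "\<pi> \<cdot> k = h" "\<pi> \<cdot> k' = h"
  "u \<in> Hom C R Q" "q1 \<cdot> u = k \<cdot> d1" "q2 \<cdot> u = d2"
  "u' \<in> Hom C R Q" "q1 \<cdot> u' = k' \<cdot> d1" "q2 \<cdot> u' = d2"
  "fhtpy C fib weq g (\<epsilon> \<cdot> u) (\<epsilon> \<cdot> u')"
  shows "fhtpy C fib weq \<pi> k k'"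
proof -
  have "\<forall>D h R d1 d2 k k' u u'.
          h \<in> Hom C D (Cod C f) \<and> pullback C h f R d1 d2 \<and>
          k \<in> Hom C D Pi \<and> k' \<in> Hom C D Pi \<and> cmp C \<pi> k = h \<and> cmp C \<pi> k' = h \<and>
          u \<in> Hom C R Q \<and> cmp C q1 u = cmp C k d1 \<and> cmp C q2 u = d2 \<and>
          u' \<in> Hom C R Q \<and> cmp C q1 u' = cmp C k' d1 \<and> cmp C q2 u' = d2 \<and>
          fhtpy C fib weq g (cmp C \<epsilon> u) (cmp C \<epsilon> u')
          \<longrightarrow> fhtpy C fib weq \<pi> k k'"
    using assms(1,2) unfolding is_pi_def by (elim conjE) simp
  then show ?thesis using assms(3-) by blast
qed

lemma fhtpyD: assumes "fhtpy C fib weq p m m'"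
  shows "m \<in> Hom C (Dom C m) (Dom C p)" "m' \<in> Hom C (Dom C m) (Dom C p)" "p \<cdot> m = p \<cdot> m'"
   "\<exists>PY r st YY q1 q2 H. fpath_obj C fib weq p PY r st YY q1 q2 \<and>
        H \<in> Hom C (Dom C m) PY \<and> q1 \<cdot> (st \<cdot> H) = m \<and> q2 \<cdot> (st \<cdot> H) = m'"
  using assms unfolding fhtpy_def by auto

lemma pi_comp:
  assumes P1: "is_pi C fib weq strong d f1 Pi1 \<pi>1 Q1 a1 b1 \<epsilon>1"
  and P2: "is_pi C fib weq strong \<pi>1 g Pi2 \<pi>2 Q2 a2 b2 \<epsilon>2"
  shows "\<exists>Q q1 q2 \<epsilon>. is_pi C fib weq strong d (g \<cdot> f1) Pi2 \<pi>2 Q q1 q2 \<epsilon>"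
proof -
  note i1 = is_piD[OF P1] and i2 = is_piD[OF P2]
  define X where "X = Dom C d"
  define I where "I = Dom C f1"
  define J1 where "J1 = Cod C f1"
  define J where "J = Cod C g"
  have pQ1: "pullback C \<pi>1 f1 Q1 a1 b1" and pQ2: "pullback C \<pi>2 g Q2 a2 b2" using i1 i2 by auto
  have hpi1: "\<pi>1 \<in> Hom C Pi1 J1" using i1(5) J1_def by simp
  have hpi2: "\<pi>2 \<in> Hom C Pi2 J" using i2(5) J_def by simp
  have DgJ1: "Dom C g = J1" using i2(3) HomD[OF hpi1] by simp
  have DpPi1: "Dom C \<pi>1 = Pi1" using HomD[OF hpi1] by simp
  have hd: "d \<in> Hom C X I" using i1(1) fib_Ar i1(3) HomI unfolding X_def I_def by metis
  have hf1: "f1 \<in> Hom C I J1" using i1(2) fib_Ar HomI unfolding I_def J1_def by metis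
  have hg: "g \<in> Hom C J1 J" using i2(2) fib_Ar HomI DgJ1 unfolding J_def by metis
  have q1: "a1 \<in> Hom C Q1 Pi1" "b1 \<in> Hom C Q1 I" "\<pi>1 \<cdot> a1 = f1 \<cdot> b1"
    using pbD[OF pQ1] DpPi1 unfolding I_def by auto
  have q2: "a2 \<in> Hom C Q2 Pi2" "b2 \<in> Hom C Q2 J1" "\<pi>2 \<cdot> a2 = g \<cdot> b2"
    using pbD[OF pQ2] HomD[OF hpi2] DgJ1 by auto
  have e1: "\<epsilon>1 \<in> Hom C Q1 X" "d \<cdot> \<epsilon>1 = b1" using i1 X_def by auto
  have e2: "\<epsilon>2 \<in> Hom C Q2 Pi1" "\<pi>1 \<cdot> \<epsilon>2 = b2" using i2 DpPi1 by auto
  obtain Q c1 c2 where pQ0: "pullback C b2 f1 Q c1 c2"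
    using pb_ex[of f1 b2] i1(2) q2(2) hf1 by (auto simp: Hom_def)
  have c: "c1 \<in> Hom C Q Q2" "c2 \<in> Hom C Q I" "b2 \<cdot> c1 = f1 \<cdot> c2"
    using pbD[OF pQ0] q2(2) hf1 by (auto simp: Hom_def)
  have pQ: "pullback C \<pi>2 (g \<cdot> f1) Q (a2 \<cdot> c1) c2" using paste1[OF pQ2 pQ0] .
  have "\<pi>1 \<cdot> (\<epsilon>2 \<cdot> c1) = f1 \<cdot> c2" using hpi1 e2(1) c(1) q2(2) hf1 c(2)
    by (simp add: cs ext[OF e2(2)] c(3))
  then obtain w where w: "w \<in> Hom C Q Q1" "a1 \<cdot> w = \<epsilon>2 \<cdot> c1" "b1 \<cdot> w = c2"
    using pb_ind[OF pQ1, of "\<epsilon>2 \<cdot> c1" Q c2] e2 c hf1 Hom_comp[OF c(1) e2(1)] DpPi1 by (auto simp: Hom_def)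
  define \<epsilon> where "\<epsilon> = \<epsilon>1 \<cdot> w"
  have heps: "\<epsilon> \<in> Hom C Q X" unfolding \<epsilon>_def using Hom_comp[OF w(1) e1(1)] .
  have deps: "d \<cdot> \<epsilon> = c2" unfolding \<epsilon>_def using hd e1(1) w(1) q1(2) by (simp add: cs ext[OF e1(2)] w(3))
  have hgf: "g \<cdot> f1 \<in> Hom C I J" using Hom_comp[OF hf1 hg] .
  have Dgf: "Dom C (g \<cdot> f1) = I" "Cod C (g \<cdot> f1) = J" using HomD[OF hgf] by auto
  have gff: "g \<cdot> f1 \<in> fib" using fib_comp[OF i1(2) i2(2)] hf1 hg by (simp add: Hom_def)
  have stp: "\<exists>R' r1 r2 e. pullback C h g R' r1 r2 \<and> r1 \<in> Hom C R' D0 \<and> r2 \<in> Hom C R' J1 \<and>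
      h \<cdot> r1 = g \<cdot> r2 \<and> e \<in> Hom C R R' \<and> r1 \<cdot> e = e1' \<and> r2 \<cdot> e = f1 \<cdot> e2' \<and> pullback C r2 f1 R e e2'"
    if h: "h \<in> Hom C D0 J" and pR: "pullback C h (g \<cdot> f1) R e1' e2'" for h D0 R e1' e2'
  proof -
    obtain R' r1 r2 where pR': "pullback C h g R' r1 r2" using pb_ex[of g h] i2(2) h hg by (auto simp: Hom_def)
    have r: "r1 \<in> Hom C R' D0" "r2 \<in> Hom C R' J1" "h \<cdot> r1 = g \<cdot> r2" using pbD[OF pR'] h hg by (auto simp: Hom_def)
    have ee: "e1' \<in> Hom C R D0" "e2' \<in> Hom C R I" "h \<cdot> e1' = (g \<cdot> f1) \<cdot> e2'" using pbD[OF pR] h Dgf by (auto simp: Hom_def)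
    have "h \<cdot> e1' = g \<cdot> (f1 \<cdot> e2')" using ee assoc[OF ee(2) hf1 hg] by simp
    then obtain e where e: "e \<in> Hom C R R'" "r1 \<cdot> e = e1'" "r2 \<cdot> e = f1 \<cdot> e2'"
      using pb_ind[OF pR', of e1' R "f1 \<cdot> e2'"] ee h hg Hom_comp[OF ee(2) hf1] by (auto simp: Hom_def)
    have "pullback C r2 f1 R e e2'" using paste2[OF pR' pR hf1 hg e] .
    then show ?thesis using pR' r e by blast
  qed
  have "is_pi C fib weq strong d (g \<cdot> f1) Pi2 \<pi>2 Q (a2 \<cdot> c1) c2 \<epsilon>"
    unfolding is_pi_def
  proof (intro conjI)
    show "d \<in> fib" "g \<cdot> f1 \<in> fib" "\<pi>2 \<in> fib" "pullback C \<pi>2 (g \<cdot> f1) Q (a2 \<cdot> c1) c2" "d \<cdot> \<epsilon> = c2"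
      using i1 i2 gff pQ deps by auto
    show "Cod C d = Dom C (g \<cdot> f1)" "\<pi>2 \<in> Hom C Pi2 (Cod C (g \<cdot> f1))" "\<epsilon> \<in> Hom C Q (Dom C d)"
      using Dgf hd hpi2 heps X_def by (auto simp: Hom_def)
    show "\<forall>D h R d1 d2 m.
        h \<in> Hom C D (Cod C (g \<cdot> f1)) \<and> pullback C h (g \<cdot> f1) R d1 d2 \<and>
        m \<in> Hom C R (Dom C d) \<and> d \<cdot> m = d2 \<longrightarrow>
        (\<exists>k \<in> Hom C D Pi2. \<pi>2 \<cdot> k = h \<and>
           (\<forall>u. u \<in> Hom C R Q \<and> (a2 \<cdot> c1) \<cdot> u = k \<cdot> d1 \<and> c2 \<cdot> u = d2 \<longrightarrow>
                fhtpy C fib weq d (\<epsilon> \<cdot> u) m))"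
    proof (intro allI impI)
      fix D0 h R d1 d2 m
      assume A: "h \<in> Hom C D0 (Cod C (g \<cdot> f1)) \<and> pullback C h (g \<cdot> f1) R d1 d2 \<and>
        m \<in> Hom C R (Dom C d) \<and> d \<cdot> m = d2"
      then have h: "h \<in> Hom C D0 J" and pR: "pullback C h (g \<cdot> f1) R d1 d2" and hm: "m \<in> Hom C R X"
        and dm: "d \<cdot> m = d2" using Dgf X_def by auto
      have dd: "d1 \<in> Hom C R D0" "d2 \<in> Hom C R I" using pbD[OF pR] h Dgf by (auto simp: Hom_def)
      obtain R' r1 r2 e where pR': "pullback C h g R' r1 r2" and r: "r1 \<in> Hom C R' D0" "r2 \<in> Hom C R' J1"
        "h \<cdot> r1 = g \<cdot> r2" and e: "e \<in> Hom C R R'" "r1 \<cdot> e = d1" "r2 \<cdot> e = f1 \<cdot> d2"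
        and pRe: "pullback C r2 f1 R e d2"
        using stp[OF h pR] by blast
      obtain k1 where k1: "k1 \<in> Hom C R' Pi1" "\<pi>1 \<cdot> k1 = r2" and
        K1: "\<forall>u. u \<in> Hom C R Q1 \<and> a1 \<cdot> u = k1 \<cdot> e \<and> b1 \<cdot> u = d2 \<longrightarrow> fhtpy C fib weq d (\<epsilon>1 \<cdot> u) m"
        using is_pi_weak[OF P1, of r2 R' R e d2 m] r(2) pRe hm dm J1_def X_def by auto
      obtain k where k: "k \<in> Hom C D0 Pi2" "\<pi>2 \<cdot> k = h" and
        K2: "\<forall>u. u \<in> Hom C R' Q2 \<and> a2 \<cdot> u = k \<cdot> r1 \<and> b2 \<cdot> u = r2 \<longrightarrow> fhtpy C fib weq \<pi>1 (\<epsilon>2 \<cdot> u) k1"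
        using is_pi_weak[OF P2, of h D0 R' r1 r2 k1] h pR' k1 J_def DpPi1 by auto
      show "\<exists>k \<in> Hom C D0 Pi2. \<pi>2 \<cdot> k = h \<and>
           (\<forall>u. u \<in> Hom C R Q \<and> (a2 \<cdot> c1) \<cdot> u = k \<cdot> d1 \<and> c2 \<cdot> u = d2 \<longrightarrow>
                fhtpy C fib weq d (\<epsilon> \<cdot> u) m)"
      proof (intro bexI[of _ k] conjI allI impI)
        show "k \<in> Hom C D0 Pi2" "\<pi>2 \<cdot> k = h" using k by auto
        fix u assume U: "u \<in> Hom C R Q \<and> (a2 \<cdot> c1) \<cdot> u = k \<cdot> d1 \<and> c2 \<cdot> u = d2"
        then have hu: "u \<in> Hom C R Q" and uc: "c2 \<cdot> u = d2" by auto
        have ua: "a2 \<cdot> (c1 \<cdot> u) = k \<cdot> d1" using U assoc[OF hu c(1) q2(1)] by simp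
        have "\<pi>2 \<cdot> (k \<cdot> r1) = g \<cdot> r2" using hpi2 k(1) r(1) h by (simp add: cs ext[OF k(2)] r(3))
        then obtain u2 where u2: "u2 \<in> Hom C R' Q2" "a2 \<cdot> u2 = k \<cdot> r1" "b2 \<cdot> u2 = r2"
          using pb_ind[OF pQ2, of "k \<cdot> r1" R' r2] Hom_comp[OF r(1) k(1)] r(2) hpi2 hg by (auto simp: Hom_def)
        have "fhtpy C fib weq \<pi>1 (\<epsilon>2 \<cdot> u2) k1" using K2 u2 by blast
        from fhtpyD(4)[OF this] obtain PY rr st YY y1 y2 H where FP: "fpath_obj C fib weq \<pi>1 PY rr st YY y1 y2"
          and H: "H \<in> Hom C (Dom C (\<epsilon>2 \<cdot> u2)) PY" "y1 \<cdot> (st \<cdot> H) = \<epsilon>2 \<cdot> u2" "y2 \<cdot> (st \<cdot> H) = k1"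
          by blast
        have HR: "H \<in> Hom C R' PY" using H(1) u2(1) e2(1) by (simp add: cs)
        have c1u: "c1 \<cdot> u = u2 \<cdot> e"
        proof (rule pb_uniq[OF pQ2])
          show "c1 \<cdot> u \<in> Hom C R Q2" "u2 \<cdot> e \<in> Hom C R Q2" using Hom_comp hu c(1) u2(1) e(1) by blast+
          show "a2 \<cdot> (c1 \<cdot> u) = a2 \<cdot> (u2 \<cdot> e)" using q2(1) u2(1) e(1) k(1) r(1)
            by (simp add: cs ua ext[OF u2(2)] e(2))
          show "b2 \<cdot> (c1 \<cdot> u) = b2 \<cdot> (u2 \<cdot> e)" using q2(2) u2(1) e(1) c(1) hu hf1 c(2) r(2)
            by (simp add: cs ext[OF c(3)] ext[OF u2(3)] uc e(3))
        qed
        have "\<pi>1 \<cdot> (k1 \<cdot> e) = f1 \<cdot> d2" using hpi1 k1(1) e(1) r(2) by (simp add: cs ext[OF k1(2)] e(3))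
        then obtain u1 where u1: "u1 \<in> Hom C R Q1" "a1 \<cdot> u1 = k1 \<cdot> e" "b1 \<cdot> u1 = d2"
          using pb_ind[OF pQ1, of "k1 \<cdot> e" R d2] Hom_comp[OF e(1) k1(1)] dd hpi1 hf1 by (auto simp: Hom_def)
        have "fhtpy C fib weq d (\<epsilon>1 \<cdot> u1) m" using K1 u1 by blast
        from fhtpyD(4)[OF this] obtain PX rX stX XX x1 x2 G2 where FX: "fpath_obj C fib weq d PX rX stX XX x1 x2"
          and G2: "G2 \<in> Hom C (Dom C (\<epsilon>1 \<cdot> u1)) PX" "x1 \<cdot> (stX \<cdot> G2) = \<epsilon>1 \<cdot> u1" "x2 \<cdot> (stX \<cdot> G2) = m"
          by blast
        have G2R: "G2 \<in> Hom C R PX" using G2(1) u1(1) e1(1) by (simp add: cs)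
        have hst: "st \<in> Hom C PY YY" "y1 \<in> Hom C YY Pi1" "y2 \<in> Hom C YY Pi1" using fpoD[OF FP] DpPi1 by auto
        have t1: "a1 \<cdot> (w \<cdot> u) = y1 \<cdot> (st \<cdot> (H \<cdot> e))" using q1(1) w(1) hu HR e(1) hst e2(1) c(1) u2(1)
          by (simp add: cs ext[OF w(2)] c1u ext2[OF H(2)])
        have t2: "a1 \<cdot> u1 = y2 \<cdot> (st \<cdot> (H \<cdot> e))" using HR e(1) hst k1(1)
          by (simp add: cs ext2[OF H(3)] u1(2))
        have t3: "b1 \<cdot> u1 = b1 \<cdot> (w \<cdot> u)" using q1(2) w(1) hu c(2) by (simp add: cs ext[OF w(3)] uc u1(3))
        obtain G1 where G1: "G1 \<in> Hom C R PX" "x1 \<cdot> (stX \<cdot> G1) = \<epsilon>1 \<cdot> (w \<cdot> u)" "x2 \<cdot> (stX \<cdot> G1) = \<epsilon>1 \<cdot> u1"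
          using transport[OF pQ1 FP FX _ e1(2) Hom_comp[OF e(1) HR] Hom_comp[OF hu w(1)] u1(1) t1 t2 t3] e1(1) X_def
          by auto
        obtain G where G: "G \<in> Hom C R PX" "x1 \<cdot> (stX \<cdot> G) = \<epsilon>1 \<cdot> (w \<cdot> u)" "x2 \<cdot> (stX \<cdot> G) = m"
          using trans_fixed[OF FX G1(1) G2R] G1 G2 by auto
        have eu: "\<epsilon> \<cdot> u = \<epsilon>1 \<cdot> (w \<cdot> u)" unfolding \<epsilon>_def using assoc[OF hu w(1) e1(1)] .
        have heu: "\<epsilon> \<cdot> u \<in> Hom C R X" using Hom_comp[OF hu heps] .
        have deu: "d \<cdot> (\<epsilon> \<cdot> u) = d \<cdot> m" using assoc[OF hu heps hd] deps uc dm by simp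
        have DR: "Dom C (\<epsilon> \<cdot> u) = R" using HomD[OF heu] by simp
        show "fhtpy C fib weq d (\<epsilon> \<cdot> u) m" unfolding fhtpy_def DR
        proof (intro conjI)
          show "\<epsilon> \<cdot> u \<in> Hom C R (Dom C d)" "m \<in> Hom C R (Dom C d)" using heu hm X_def by auto
          show "d \<cdot> (\<epsilon> \<cdot> u) = d \<cdot> m" by (rule deu)
          show "\<exists>PY r st YY q1 q2 H. fpath_obj C fib weq d PY r st YY q1 q2 \<and> H \<in> Hom C R PY \<and>
            q1 \<cdot> (st \<cdot> H) = \<epsilon> \<cdot> u \<and> q2 \<cdot> (st \<cdot> H) = m"
            using FX G eu by metis
        qed
      qed
    qed

    show "strong \<longrightarrow>
       (\<forall>D h R d1 d2 k k' u u'.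
          h \<in> Hom C D (Cod C (g \<cdot> f1)) \<and> pullback C h (g \<cdot> f1) R d1 d2 \<and>
          k \<in> Hom C D Pi2 \<and> k' \<in> Hom C D Pi2 \<and> \<pi>2 \<cdot> k = h \<and> \<pi>2 \<cdot> k' = h \<and>
          u \<in> Hom C R Q \<and> (a2 \<cdot> c1) \<cdot> u = k \<cdot> d1 \<and> c2 \<cdot> u = d2 \<and>
          u' \<in> Hom C R Q \<and> (a2 \<cdot> c1) \<cdot> u' = k' \<cdot> d1 \<and> c2 \<cdot> u' = d2 \<and>
          fhtpy C fib weq d (\<epsilon> \<cdot> u) (\<epsilon> \<cdot> u')
          \<longrightarrow> fhtpy C fib weq \<pi>2 k k')"
    proof (intro impI allI)
      assume str: strong
      fix D0 h R d1 d2 k k' u u'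
      assume A: "h \<in> Hom C D0 (Cod C (g \<cdot> f1)) \<and> pullback C h (g \<cdot> f1) R d1 d2 \<and>
          k \<in> Hom C D0 Pi2 \<and> k' \<in> Hom C D0 Pi2 \<and> \<pi>2 \<cdot> k = h \<and> \<pi>2 \<cdot> k' = h \<and>
          u \<in> Hom C R Q \<and> (a2 \<cdot> c1) \<cdot> u = k \<cdot> d1 \<and> c2 \<cdot> u = d2 \<and>
          u' \<in> Hom C R Q \<and> (a2 \<cdot> c1) \<cdot> u' = k' \<cdot> d1 \<and> c2 \<cdot> u' = d2 \<and>
          fhtpy C fib weq d (\<epsilon> \<cdot> u) (\<epsilon> \<cdot> u')"
      then have h: "h \<in> Hom C D0 J" and pR: "pullback C h (g \<cdot> f1) R d1 d2"
        and k: "k \<in> Hom C D0 Pi2" "\<pi>2 \<cdot> k = h" and k': "k' \<in> Hom C D0 Pi2" "\<pi>2 \<cdot> k' = h"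
        and u: "u \<in> Hom C R Q" "(a2 \<cdot> c1) \<cdot> u = k \<cdot> d1" "c2 \<cdot> u = d2"
        and u': "u' \<in> Hom C R Q" "(a2 \<cdot> c1) \<cdot> u' = k' \<cdot> d1" "c2 \<cdot> u' = d2"
        and FH: "fhtpy C fib weq d (\<epsilon> \<cdot> u) (\<epsilon> \<cdot> u')" using Dgf by auto
      have dd: "d1 \<in> Hom C R D0" "d2 \<in> Hom C R I" using pbD[OF pR] h Dgf by (auto simp: Hom_def)
      obtain R' r1 r2 e where pR': "pullback C h g R' r1 r2" and r: "r1 \<in> Hom C R' D0" "r2 \<in> Hom C R' J1"
        "h \<cdot> r1 = g \<cdot> r2" and e: "e \<in> Hom C R R'" "r1 \<cdot> e = d1" "r2 \<cdot> e = f1 \<cdot> d2"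
        and pRe: "pullback C r2 f1 R e d2"
        using stp[OF h pR] by blast
      have U2: "\<exists>u2. u2 \<in> Hom C R' Q2 \<and> a2 \<cdot> u2 = kk \<cdot> r1 \<and> b2 \<cdot> u2 = r2 \<and> c1 \<cdot> uu = u2 \<cdot> e"
        if kk: "kk \<in> Hom C D0 Pi2" "\<pi>2 \<cdot> kk = h" and uu: "uu \<in> Hom C R Q" "(a2 \<cdot> c1) \<cdot> uu = kk \<cdot> d1"
          "c2 \<cdot> uu = d2" for kk uu
      proof -
        have ua: "a2 \<cdot> (c1 \<cdot> uu) = kk \<cdot> d1" using uu assoc[OF uu(1) c(1) q2(1)] by simp
        have "\<pi>2 \<cdot> (kk \<cdot> r1) = g \<cdot> r2" using hpi2 kk(1) r(1) h by (simp add: cs ext[OF kk(2)] r(3))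
        then obtain u2 where u2: "u2 \<in> Hom C R' Q2" "a2 \<cdot> u2 = kk \<cdot> r1" "b2 \<cdot> u2 = r2"
          using pb_ind[OF pQ2, of "kk \<cdot> r1" R' r2] Hom_comp[OF r(1) kk(1)] r(2) hpi2 hg by (auto simp: Hom_def)
        have "c1 \<cdot> uu = u2 \<cdot> e"
        proof (rule pb_uniq[OF pQ2])
          show "c1 \<cdot> uu \<in> Hom C R Q2" "u2 \<cdot> e \<in> Hom C R Q2" using Hom_comp uu(1) c(1) u2(1) e(1) by blast+
          show "a2 \<cdot> (c1 \<cdot> uu) = a2 \<cdot> (u2 \<cdot> e)" using q2(1) u2(1) e(1) kk(1) r(1)
            by (simp add: cs ua ext[OF u2(2)] e(2))
          show "b2 \<cdot> (c1 \<cdot> uu) = b2 \<cdot> (u2 \<cdot> e)" using q2(2) u2(1) e(1) c(1) uu(1) hf1 c(2) r(2)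
            by (simp add: cs ext[OF c(3)] ext[OF u2(3)] uu(3) e(3))
        qed
        then show ?thesis using u2 by blast
      qed
      obtain u2 where u2: "u2 \<in> Hom C R' Q2" "a2 \<cdot> u2 = k \<cdot> r1" "b2 \<cdot> u2 = r2" "c1 \<cdot> u = u2 \<cdot> e"
        using U2[OF k u] by blast
      obtain u2' where u2': "u2' \<in> Hom C R' Q2" "a2 \<cdot> u2' = k' \<cdot> r1" "b2 \<cdot> u2' = r2" "c1 \<cdot> u' = u2' \<cdot> e"
        using U2[OF k' u'] by blast
      have W: "w \<cdot> uu \<in> Hom C R Q1 \<and> a1 \<cdot> (w \<cdot> uu) = (\<epsilon>2 \<cdot> vv) \<cdot> e \<and> b1 \<cdot> (w \<cdot> uu) = d2"
        if uu: "uu \<in> Hom C R Q" "c2 \<cdot> uu = d2" and vv: "vv \<in> Hom C R' Q2" "c1 \<cdot> uu = vv \<cdot> e" for uu vv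
      proof (intro conjI)
        show "w \<cdot> uu \<in> Hom C R Q1" using Hom_comp[OF uu(1) w(1)] .
        show "a1 \<cdot> (w \<cdot> uu) = (\<epsilon>2 \<cdot> vv) \<cdot> e" using q1(1) w(1) uu(1) vv(1) e(1) e2(1) c(1)
          by (simp add: cs ext[OF w(2)] vv(2))
        show "b1 \<cdot> (w \<cdot> uu) = d2" using q1(2) w(1) uu(1) c(2) by (simp add: cs ext[OF w(3)] uu(2))
      qed
      have eu: "\<epsilon> \<cdot> u = \<epsilon>1 \<cdot> (w \<cdot> u)" "\<epsilon> \<cdot> u' = \<epsilon>1 \<cdot> (w \<cdot> u')"
        unfolding \<epsilon>_def using assoc[OF u(1) w(1) e1(1)] assoc[OF u'(1) w(1) e1(1)] by auto
      have pe: "\<pi>1 \<cdot> (\<epsilon>2 \<cdot> u2) = r2" "\<pi>1 \<cdot> (\<epsilon>2 \<cdot> u2') = r2"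
        using hpi1 e2(1) u2(1) u2'(1) q2(2) by (simp_all add: cs ext[OF e2(2)] u2(3) u2'(3))
      have "fhtpy C fib weq \<pi>1 (\<epsilon>2 \<cdot> u2) (\<epsilon>2 \<cdot> u2')"
        using is_pi_strong[OF P1 str, of r2 R' R e d2 "\<epsilon>2 \<cdot> u2" "\<epsilon>2 \<cdot> u2'" "w \<cdot> u" "w \<cdot> u'"]
          r(2) pRe Hom_comp[OF u2(1) e2(1)] Hom_comp[OF u2'(1) e2(1)] pe
          W[OF u(1) u(3) u2(1) u2(4)] W[OF u'(1) u'(3) u2'(1) u2'(4)] FH eu J1_def by auto
      then show "fhtpy C fib weq \<pi>2 k k'"
        using is_pi_strong[OF P2 str, of h D0 R' r1 r2 k k' u2 u2'] h pR' k k' u2 u2' J_def by auto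
    qed

  qed
  then show ?thesis by blast
qed


lemma closure_fib: assumes DC: "display_class C fib weq strong \<D>" and f: "f \<in> comp_closure C \<D>"
  shows "f \<in> fib"
  using f
proof (induction rule: comp_closure.induct)
  case (base d) then show ?case using DC unfolding display_class_def by blast
next
  case (comp f g) then show ?case using fib_comp by blast
qed

lemma main_aux: assumes DC: "display_class C fib weq strong \<D>" and f: "f \<in> comp_closure C \<D>"
  shows "\<forall>d \<in> \<D>. Cod C d = Dom C f \<longrightarrow> (\<exists>Pi \<pi> Q q1 q2 \<epsilon>. is_pi C fib weq strong d f Pi \<pi> Q q1 q2 \<epsilon> \<and> \<pi> \<in> \<D>)"
  using f
proof (induction rule: comp_closure.induct)
  case (base e)
  have "\<forall>d e. d \<in> \<D> \<and> e \<in> \<D> \<and> Cod C d = Dom C e \<longrightarrow>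
        (\<exists>Pi \<pi> Q q1 q2 \<epsilon>. is_pi C fib weq strong d e Pi \<pi> Q q1 q2 \<epsilon> \<and> \<pi> \<in> \<D>)"
    using DC unfolding display_class_def by (elim conjE)
  then show ?case using base by blast
next
  case (comp f1 g)
  show ?case
  proof (intro ballI impI)
    fix d assume d: "d \<in> \<D>" and cd: "Cod C d = Dom C (g \<cdot> f1)"
    have f1f: "f1 \<in> fib" and gf: "g \<in> fib" using closure_fib[OF DC] comp by auto
    have "Dom C (g \<cdot> f1) = Dom C f1" using Dom_comp_s fib_Ar f1f gf comp(3) by blast
    then obtain Pi1 \<pi>1 Q1 a1 b1 \<epsilon>1 where P1: "is_pi C fib weq strong d f1 Pi1 \<pi>1 Q1 a1 b1 \<epsilon>1" and p1: "\<pi>1 \<in> \<D>"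
      using comp.IH(1) d cd by auto
    have "Cod C \<pi>1 = Dom C g" using is_piD(5)[OF P1] comp(3) HomD by metis
    then obtain Pi2 \<pi>2 Q2 a2 b2 \<epsilon>2 where P2: "is_pi C fib weq strong \<pi>1 g Pi2 \<pi>2 Q2 a2 b2 \<epsilon>2" and p2: "\<pi>2 \<in> \<D>"
      using comp.IH(2) p1 by blast
    show "\<exists>Pi \<pi> Q q1 q2 \<epsilon>. is_pi C fib weq strong d (g \<cdot> f1) Pi \<pi> Q q1 q2 \<epsilon> \<and> \<pi> \<in> \<D>"
      using pi_comp[OF P1 P2] p2 by blast
  qed
qed

end

theorem lemma6p4:
  fixes C :: "('o,'m) cat" and fib weq \<D> :: "'m set" and strong :: bool
  assumes "path_category C fib weq"
    and "display_class C fib weq strong \<D>"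
    and "d \<in> \<D>" and "f \<in> comp_closure C \<D>" and "Cod C d = Dom C f"
  shows "has_pi C fib weq strong d f"
proof -
  interpret pc C fib weq using assms(1) by (rule pc.intro)
  show ?thesis using main_aux[OF assms(2,4)] assms(3,5) unfolding has_pi_def by blast
qed

end
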